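(* Let $f,g\in Lie_{\mathbf{k}[Y]}(X)$ be $\mathbf{k}$-monic with $\bar f^Y=1$ and $g=rx$ where $r\in\mathbf{k}[Y]$ and $x\in X$. Then every inclusion composition of $f$ and $g$ is trivial modulo $(\{f\}\cup rX, w)$ for the corresponding $w$, where $rX=\{rx': x'\in X\}$.
   Context: Let $\mathbf{k}$ be a field and $X$, $Y$ well-ordered sets. $X^*$ is the free monoid on $X$. Lex ordering $>$ on $X^*$: $1>t$ for every $t\neq1$, and for $u=xu'$, $v=x'v'$ ($x,x'\in X$), $u>v$ iff $x>x'$, or $x=x'$ and $u'>v'$. Deg-lex $\succ_X$: longer words are bigger, equal lengths compared by lex. $w\ne1$ is an ALSW if $w>vu$ for all factorizations $w=uv$, $u,v\neq1$; $ALSW(X)$ is their set. Every $c\in X^*$ factors uniquely as $c=c_1\cdots c_n$, $c_i\in ALSW(X)$, $c_1\le\cdots\le c_n$. Each $w\in ALSW(X)$ has a standard bracketing $[w]$: $[w]=w$ if $|w|=1$, else $[w]=[[u],[v]]$ with $v$ the longest proper ALSW suffix of $w$. $[Y]$ is the free commutative monoid on $Y$ with deg-lex order $\succ_Y$; $\mathbf{k}[Y]\langle X\rangle$ is the free associative $\mathbf{k}[Y]$-algebra on $X$ with $\mathbf{k}$-basis $[Y]X^*=\{u^Yu^X\}$; $Lie_{\mathbf{k}[Y]}(X)$ is its $\mathbf{k}[Y]$-Lie subalgebra generated by $X$ under $[p,q]=pq-qp$. Order $[Y]X^*$ by $u\succ v$ iff $u^X\succ_Xv^X$, or $u^X=v^X$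 and $u^Y\succ_Y v^Y$. For nonzero $p$, $\bar p=\bar p^Y\bar p^X$ is the $\succ$-largest element of $[Y]X^*$ occurring in $p$; $p$ is $\mathbf{k}$-monic if its coefficient is $1$. Special bracketing: if $u\in ALSW(X)$, $a,b\in X^*$, $aub\in ALSW(X)$, then $[aub]=[a[uc]d]$ with $b=cd$ and $[uc]$ the standard bracketing of $uc$ occurring as a sub-bracket; with $c=c_1\cdots c_n$ the nondecreasing ALSW factorization, $[aub]_u$ is obtained by replacing $[uc]$ with $[\cdots[[u,[c_1]],[c_2]],\dots,[c_n]]$. For $\mathbf{k}$-monic $s$ and $a,b$ with $a\bar s^Xb\in ALSW(X)$, the normal $s$-word $[asb]_{\bar s}$ is obtained from $[a\bar s^Xb]_{\bar s^X}$ by replacing the sub-bracket $[\bar s^X]$ by $s$. Inclusion composition of $\mathbf{k}$-monic $f,g$: with $L=\mathrm{lcm}(\bar f^Y,\bar g^Y)$ in $[Y]$, if $\bar f^X=a\bar g^Xb$ for $a,b\in X^*$, then $C_1\langle f,g\rangle_w=\frac{L}{\bar f^Y}f-\frac{L}{\bar g^Y}[agb]_{\bar g}$ with $w=L\bar f^X$. For a $\mathbf{k}$-monic set $S$ and $w\in[Y]X^*$, $h$ is trivial modulo $(S,w)$ if $h=\sum_i\alpha_i\beta_i[a_is_ib_i]_{\bar s_i}$ with $\alpha_i\in\mathbf{k}$, $\beta_i\in[Y]$, $s_i\in S$, $\beta_i\bar s_i^Ya_i\bar s_i^Xb_i\prec w$. *)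

theory Defs
  imports Main "HOL-Library.Multiset" "HOL-Library.Poly_Mapping"
begin

text \<open>Lex order on X*: the empty word is the largest; otherwise compare first letters.\<close>
fun lexgt :: "'a::linorder list \<Rightarrow> 'a list \<Rightarrow> bool" where
  "lexgt [] v = (v \<noteq> [])"
| "lexgt (x # u) [] = False"
| "lexgt (x # u) (y # v) = (y < x \<or> (x = y \<and> lexgt u v))"

definition deglex_gt :: "'a::linorder list \<Rightarrow> 'a list \<Rightarrow> bool" where
  "deglex_gt u v \<longleftrightarrow> length v < length u \<or> (length u = length v \<and> lexgt u v)"

definition alsw :: "'a::linorder list \<Rightarrow> bool" where
  "alsw w \<longleftrightarrow> w \<noteq> [] \<and> (\<forall>u v. w = u @ v \<and> u \<noteq> [] \<and> v \<noteq> [] \<longrightarrow> lexgt w (v @ u))"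

definition alsw_fact :: "'a::linorder list \<Rightarrow> 'a list list" where
  "alsw_fact c = (THE cs. concat cs = c \<and> (\<forall>ci\<in>set cs. alsw ci)
      \<and> sorted_wrt (\<lambda>p q. p = q \<or> lexgt q p) cs)"

definition deglexY_gt :: "'a::linorder multiset \<Rightarrow> 'a multiset \<Rightarrow> bool" where
  "deglexY_gt m n \<longleftrightarrow> size n < size m \<or>
     (size m = size n \<and> lexgt (rev (sorted_list_of_multiset m)) (rev (sorted_list_of_multiset n)))"

type_synonym ('y, 'x, 'k) kpol = "('y multiset \<times> 'x list) \<Rightarrow>\<^sub>0 'k"

definition mon_gt :: "'y::linorder multiset \<times> 'x::linorder list \<Rightarrow> 'y multiset \<times> 'x list \<Rightarrow> bool" where
  "mon_gt m n \<longleftrightarrow> deglex_gt (snd m) (snd n) \<or> (snd m = snd n \<and> deglexY_gt (fst m) (fst n))"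

definition wmult :: "('y, 'x, 'k::field) kpol \<Rightarrow> ('y, 'x, 'k) kpol \<Rightarrow> ('y, 'x, 'k) kpol" where
  "wmult p q = (\<Sum>m\<in>Poly_Mapping.keys p. \<Sum>n\<in>Poly_Mapping.keys q.
      Poly_Mapping.single (fst m + fst n, snd m @ snd n) (Poly_Mapping.lookup p m * Poly_Mapping.lookup q n))"

definition lie :: "('y, 'x, 'k::field) kpol \<Rightarrow> ('y, 'x, 'k) kpol \<Rightarrow> ('y, 'x, 'k) kpol" where
  "lie p q = wmult p q - wmult q p"

definition var :: "'x \<Rightarrow> ('y, 'x, 'k::field) kpol" where
  "var x = Poly_Mapping.single ({#}, [x]) 1"

definition ymon :: "'y multiset \<Rightarrow> 'k \<Rightarrow> ('y, 'x, 'k::field) kpol" where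
  "ymon \<beta> \<alpha> = Poly_Mapping.single (\<beta>, []) \<alpha>"

definition kY :: "('y, 'x, 'k::field) kpol set" where
  "kY = {r. \<forall>m\<in>Poly_Mapping.keys r. snd m = []}"

inductive_set lie_alg :: "('y, 'x, 'k::field) kpol set" where
  gen: "var x \<in> lie_alg"
| add: "p \<in> lie_alg \<Longrightarrow> q \<in> lie_alg \<Longrightarrow> p + q \<in> lie_alg"
| smul: "r \<in> kY \<Longrightarrow> p \<in> lie_alg \<Longrightarrow> wmult r p \<in> lie_alg"
| br: "p \<in> lie_alg \<Longrightarrow> q \<in> lie_alg \<Longrightarrow> lie p q \<in> lie_alg"

definition lead :: "('y::linorder, 'x::linorder, 'k::field) kpol \<Rightarrow> 'y multiset \<times> 'x list" where
  "lead p = (THE m. m \<in> Poly_Mapping.keys p \<and> (\<forall>n\<in>Poly_Mapping.keys p. n \<noteq> m \<longrightarrow> mon_gt m n))"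

definition ly :: "('y::linorder, 'x::linorder, 'k::field) kpol \<Rightarrow> 'y multiset" where
  "ly p = fst (lead p)"

definition lx :: "('y::linorder, 'x::linorder, 'k::field) kpol \<Rightarrow> 'x list" where
  "lx p = snd (lead p)"

definition kmonic :: "('y::linorder, 'x::linorder, 'k::field) kpol \<Rightarrow> bool" where
  "kmonic p \<longleftrightarrow> p \<noteq> 0 \<and> Poly_Mapping.lookup p (lead p) = 1"

text \<open>Nonassociative bracket trees over X, with a hole constructor H.\<close>
datatype 'x btree = L 'x | H | B "'x btree" "'x btree"

fun leaves :: "'x btree \<Rightarrow> 'x list" where
  "leaves (L x) = [x]" | "leaves H = []" | "leaves (B l r) = leaves l @ leaves r"

fun holes :: "'x btree \<Rightarrow> nat" where
  "holes (L x) = 0" | "holes H = 1" | "holes (B l r) = holes l + holes r"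

text \<open>Letters occurring before the (unique) hole of a context.\<close>
fun pre :: "'x btree \<Rightarrow> 'x list" where
  "pre (L x) = [x]" | "pre H = []"
| "pre (B l r) = (if 0 < holes l then pre l else leaves l @ pre r)"

fun fill :: "'x btree \<Rightarrow> 'x btree \<Rightarrow> 'x btree" where
  "fill (L x) t = L x" | "fill H t = t" | "fill (B l r) t = B (fill l t) (fill r t)"

fun evalb :: "('y, 'x, 'k::field) kpol \<Rightarrow> 'x btree \<Rightarrow> ('y, 'x, 'k) kpol" where
  "evalb h (L x) = var x" | "evalb h H = h"
| "evalb h (B l r) = lie (evalb h l) (evalb h r)"

definition suf_start :: "'x::linorder list \<Rightarrow> nat" where
  "suf_start w = (LEAST k. 0 < k \<and> k < length w \<and> alsw (drop k w))"

function std :: "'x::linorder list \<Rightarrow> 'x btree" where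
  "std w = (let k = suf_start w in
     if 2 \<le> length w \<and> 0 < k \<and> k < length w
     then B (std (take k w)) (std (drop k w))
     else L (hd w))"
  by pat_completeness auto
termination
  by (relation "measure length") auto

text \<open>For aub ALSW with u ALSW: [aub] = [a[uc]d], b = cd, with [uc] the standard
  bracketing of uc occurring as a sub-bracket (we take the shortest such c).\<close>
definition spec_ok :: "'x::linorder list \<Rightarrow> 'x list \<Rightarrow> 'x list \<Rightarrow> 'x list \<Rightarrow> 'x btree \<Rightarrow> bool" where
  "spec_ok a u b c C \<longleftrightarrow> (\<exists>d. b = c @ d) \<and> holes C = 1 \<and> pre C = a
      \<and> std (a @ u @ b) = fill C (std (u @ c))"

definition spec_c :: "'x::linorder list \<Rightarrow> 'x list \<Rightarrow> 'x list \<Rightarrow> 'x list" where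
  "spec_c a u b = (SOME c. (\<exists>C. spec_ok a u b c C) \<and>
      (\<forall>c'. (\<exists>C. spec_ok a u b c' C) \<longrightarrow> length c \<le> length c'))"

definition spec_ctx :: "'x::linorder list \<Rightarrow> 'x list \<Rightarrow> 'x list \<Rightarrow> 'x btree" where
  "spec_ctx a u b = (SOME C. spec_ok a u b (spec_c a u b) C)"

text \<open>[aub]_u with the sub-bracket [u] replaced by the hole H:
  [uc] is replaced by [...[[u],[c1]],...,[cn]].\<close>
definition special_tree :: "'x::linorder list \<Rightarrow> 'x list \<Rightarrow> 'x list \<Rightarrow> 'x btree" where
  "special_tree a u b = fill (spec_ctx a u b)
      (foldl B H (map std (alsw_fact (spec_c a u b))))"

definition special_bracketing :: "'x::linorder list \<Rightarrow> 'x list \<Rightarrow> 'x list \<Rightarrow> 'x btree" where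
  "special_bracketing a u b = fill (special_tree a u b) (std u)"

definition nsw :: "'x::linorder list \<Rightarrow> ('y::linorder, 'x, 'k::field) kpol \<Rightarrow> 'x list \<Rightarrow> ('y, 'x, 'k) kpol" where
  "nsw a s b = evalb s (special_tree a (lx s) b)"

text \<open>C1<f,g>_w for \<bar>f^X = a \<bar>g^X b; L = lcm(\<bar>f^Y, \<bar>g^Y) is the multiset union (max).\<close>
definition incl_comp :: "('y::linorder, 'x::linorder, 'k::field) kpol \<Rightarrow> ('y, 'x, 'k) kpol
     \<Rightarrow> 'x list \<Rightarrow> 'x list \<Rightarrow> ('y, 'x, 'k) kpol" where
  "incl_comp f g a b = (let L = ly f \<union># ly g in
      wmult (ymon (L - ly f) 1) f - wmult (ymon (L - ly g) 1) (nsw a g b))"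

definition incl_w :: "('y::linorder, 'x::linorder, 'k::field) kpol \<Rightarrow> ('y, 'x, 'k) kpol
     \<Rightarrow> 'y multiset \<times> 'x list" where
  "incl_w f g = (ly f \<union># ly g, lx f)"

text \<open>h is trivial modulo (S,w): h = \<Sum> \<alpha>_i \<beta>_i [a_i s_i b_i]_{\<bar>s_i} with
  \<beta>_i \<bar>s_i^Y a_i \<bar>s_i^X b_i \<prec> w (and a_i \<bar>s_i^X b_i ALSW, so that the normal s-word is defined).\<close>
definition trivial_mod :: "('y::linorder, 'x::linorder, 'k::field) kpol set \<Rightarrow> 'y multiset \<times> 'x list
     \<Rightarrow> ('y, 'x, 'k) kpol \<Rightarrow> bool" where
  "trivial_mod S w h \<longleftrightarrow> (\<exists>ts :: ('k \<times> 'y multiset \<times> 'x list \<times> ('y, 'x, 'k) kpol \<times> 'x list) list.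
      h = sum_list (map (\<lambda>(\<alpha>, \<beta>, a, s, b). wmult (ymon \<beta> \<alpha>) (nsw a s b)) ts)
    \<and> (\<forall>(\<alpha>, \<beta>, a, s, b) \<in> set ts. s \<in> S \<and> alsw (a @ lx s @ b)
          \<and> mon_gt w (\<beta> + ly s, a @ lx s @ b)))"

end

theory Submission
  imports Defs
begin

declare std.simps[simp del]

lemma lexgt_irrefl: "\<not> lexgt u u"
  by (induction u) auto

lemma lexgt_Nil2: "\<not> lexgt u []"
  by (cases u) auto

lemma lexgt_trans: "lexgt u v \<Longrightarrow> lexgt v w \<Longrightarrow> lexgt u w"
proof (induction u arbitrary: v w)
  case Nil
  then show ?case by (cases w) (auto simp: lexgt_Nil2)
next
  case (Cons x u)
  then show ?case
    by (cases v; cases w) (auto simp: lexgt_Nil2)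
qed

lemma lexgt_asym: "lexgt u v \<Longrightarrow> \<not> lexgt v u"
  using lexgt_trans lexgt_irrefl by blast

lemma lexgt_total: "u \<noteq> v \<Longrightarrow> lexgt u v \<or> lexgt v u"
proof (induction u arbitrary: v)
  case Nil
  then show ?case by auto
next
  case (Cons x u)
  then show ?case by (cases v) (auto simp: neq_iff)
qed

lemma lexgt_append_left [simp]: "lexgt (p @ u) (p @ v) = lexgt u v"
  by (induction p) auto

lemma lexgt_prefix: "s \<noteq> [] \<Longrightarrow> lexgt u (u @ s)"
  by (induction u) auto

lemma lexgt_notprefix:
  "lexgt u v \<Longrightarrow> (\<forall>s. v \<noteq> u @ s) \<Longrightarrow> lexgt (u @ s) (v @ t)"
proof (induction u arbitrary: v)
  case Nil
  then show ?case by auto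
next
  case (Cons x u)
  then show ?case by (cases v) auto
qed

lemma lexgt_same_len:
  "length u = length v \<Longrightarrow> lexgt u v \<Longrightarrow> lexgt (u @ s) (v @ t)"
  by (rule lexgt_notprefix) (auto simp: lexgt_irrefl)

lemma lexgt_longer_notprefix:
  "length v < length u \<Longrightarrow> lexgt u v \<Longrightarrow> lexgt (u @ s) (v @ t)"
  by (rule lexgt_notprefix) auto

section \<open>ALSW: suffix characterization\<close>

lemma alsw_single: "alsw [x]"
  unfolding alsw_def by (auto simp: Cons_eq_append_conv)

lemma alsw_suf:
  "alsw w \<longleftrightarrow> w \<noteq> [] \<and> (\<forall>j. 0 < j \<longrightarrow> j < length w \<longrightarrow> lexgt w (drop j w))"
proof
  assume A: "alsw w"
  show "w \<noteq> [] \<and> (\<forall>j. 0 < j \<longrightarrow> j < length w \<longrightarrow> lexgt w (drop j w))"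
  proof (intro conjI allI impI)
    show "w \<noteq> []" using A alsw_def by blast
    fix j assume j: "0 < j" "j < length w"
    define p where "p = take j w"
    define s where "s = drop j w"
    have w: "w = p @ s" by (simp add: p_def s_def)
    have pne: "p \<noteq> []" "s \<noteq> []" using j by (auto simp: p_def s_def)
    have rot: "lexgt w (s @ p)" using A pne w unfolding alsw_def by blast
    show "lexgt w s"
    proof (rule ccontr)
      assume N: "\<not> lexgt w s"
      have "w \<noteq> s" using pne w by auto
      then have ls: "lexgt s w" using N lexgt_total by blast
      show False
      proof (cases "\<exists>t. w = s @ t")
        case True
        then obtain t where t: "w = s @ t" by blast
        have lt: "length t = length p" using t w by (metis add.commute length_append add_left_cancel)
        have tne: "t \<noteq> []" using t w pne by auto
        have r2: "lexgt w (t @ s)" using A t tne pne unfolding alsw_def by blast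
        have "lexgt t p" using rot t by simp
        moreover have "lexgt (p @ s) (t @ s)" using r2 w by simp
        ultimately show False
          using lt lexgt_same_len[of t p s s] lexgt_asym lexgt_irrefl by blast
      next
        case False
        then have "lexgt (s @ p) (w @ [])" using ls lexgt_notprefix by blast
        then show False using rot lexgt_asym by (metis append_Nil2)
      qed
    qed
  qed
next
  assume B: "w \<noteq> [] \<and> (\<forall>j. 0 < j \<longrightarrow> j < length w \<longrightarrow> lexgt w (drop j w))"
  show "alsw w" unfolding alsw_def
  proof (intro conjI allI impI)
    show "w \<noteq> []" using B by blast
    fix u v assume uv: "w = u @ v \<and> u \<noteq> [] \<and> v \<noteq> []"
    then have "lexgt w (drop (length u) w)" using B by auto
    then have "lexgt w v" using uv by simp
    have "lexgt (w @ []) (v @ u)"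
      by (rule lexgt_longer_notprefix) (use uv \<open>lexgt w v\<close> in auto)
    then show "lexgt w (v @ u)" by simp
  qed
qed

lemma alsw_sufD: "alsw w \<Longrightarrow> 0 < j \<Longrightarrow> j < length w \<Longrightarrow> lexgt w (drop j w)"
  unfolding alsw_suf by blast

lemma exists_max_aux:
  assumes "finite S" "S \<noteq> {}" "S \<subseteq> T"
    and tr: "\<And>a b c. a \<in> T \<Longrightarrow> b \<in> T \<Longrightarrow> c \<in> T \<Longrightarrow> R a b \<Longrightarrow> R b c \<Longrightarrow> R a c"
    and tot: "\<And>a b. a \<in> T \<Longrightarrow> b \<in> T \<Longrightarrow> a \<noteq> b \<Longrightarrow> R a b \<or> R b a"
  shows "\<exists>m\<in>S. \<forall>n\<in>S. n \<noteq> m \<longrightarrow> R m n"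
  using assms(1,2,3)
proof (induction S rule: finite_ne_induct)
  case (singleton x)
  show ?case by simp
next
  case (insert x F)
  obtain m where m: "m \<in> F" "\<forall>n\<in>F. n \<noteq> m \<longrightarrow> R m n"
    using insert.IH insert.prems by blast
  have xm: "x \<noteq> m" using m insert.hyps by auto
  have xT: "x \<in> T" and FT: "F \<subseteq> T" using insert.prems by auto
  show ?case
  proof (cases "R x m")
    case True
    have "\<forall>n\<in>insert x F. n \<noteq> x \<longrightarrow> R x n"
    proof (intro ballI impI)
      fix n assume n: "n \<in> insert x F" "n \<noteq> x"
      then have nF: "n \<in> F" by auto
      show "R x n"
      proof (cases "n = m")
        case True then show ?thesis using \<open>R x m\<close> by simp
      next
        case False
        then have "R m n" using m nF by blast
        then show ?thesis using tr[of x m n] \<open>R x m\<close> nF m(1) xT FT by blast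
      qed
    qed
    then show ?thesis by blast
  next
    case False
    then have "R m x" using tot[of x m] xm m(1) xT FT by blast
    then show ?thesis using m by (intro bexI[of _ m]) auto
  qed
qed

lemma exists_max:
  assumes "finite S" "S \<noteq> {}"
    and tr: "\<And>a b c. a \<in> S \<Longrightarrow> b \<in> S \<Longrightarrow> c \<in> S \<Longrightarrow> R a b \<Longrightarrow> R b c \<Longrightarrow> R a c"
    and tot: "\<And>a b. a \<in> S \<Longrightarrow> b \<in> S \<Longrightarrow> a \<noteq> b \<Longrightarrow> R a b \<or> R b a"
  shows "\<exists>m\<in>S. \<forall>n\<in>S. n \<noteq> m \<longrightarrow> R m n"
  by (rule exists_max_aux[OF assms(1,2) order_refl tr tot])

section \<open>Minimal proper suffix and standard factorization\<close>

definition msuf :: "'x::linorder list \<Rightarrow> nat \<Rightarrow> bool" where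
  "msuf w k \<longleftrightarrow> 0 < k \<and> k < length w \<and>
     (\<forall>j. 0 < j \<longrightarrow> j < length w \<longrightarrow> j \<noteq> k \<longrightarrow> lexgt (drop k w) (drop j w))"

lemma msuf_exists: "2 \<le> length w \<Longrightarrow> \<exists>k. msuf w k"
proof -
  assume l: "2 \<le> length w"
  have "\<exists>m\<in>{0<..<length w}. \<forall>n\<in>{0<..<length w}. n \<noteq> m \<longrightarrow>
          lexgt (drop m w) (drop n w)"
  proof (rule exists_max[where R = "\<lambda>a b. lexgt (drop a w) (drop b w)"])
    have "1 \<in> {0<..<length w}" using l by auto
    then show "{0<..<length w} \<noteq> {}" by blast
  next
    fix a b c
    show "lexgt (drop a w) (drop b w) \<Longrightarrow> lexgt (drop b w) (drop c w) \<Longrightarrow> lexgt (drop a w) (drop c w)"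
      using lexgt_trans by blast
  next
    fix a b :: nat assume "a \<in> {0<..<length w}" "b \<in> {0<..<length w}" "a \<noteq> b"
    then have "drop a w \<noteq> drop b w"
    proof (intro notI)
      assume "drop a w = drop b w"
      then have "length (drop a w) = length (drop b w)" by simp
      then show False using \<open>a \<in> _\<close> \<open>b \<in> _\<close> \<open>a \<noteq> b\<close> by auto
    qed
    then show "lexgt (drop a w) (drop b w) \<or> lexgt (drop b w) (drop a w)"
      using lexgt_total by blast
  qed simp
  then show ?thesis unfolding msuf_def by auto
qed

lemma msuf_alsw: "msuf w k \<Longrightarrow> alsw (drop k w)"
  unfolding alsw_suf
proof (intro conjI allI impI)
  assume m: "msuf w k"
  then show "drop k w \<noteq> []" unfolding msuf_def by auto
  fix j assume j: "0 < j" "j < length (drop k w)"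
  have "lexgt (drop k w) (drop (j + k) w)"
    using m j unfolding msuf_def by auto
  then show "lexgt (drop k w) (drop j (drop k w))" by (simp add: add.commute)
qed

lemma msuf_suf_start: "msuf w k \<Longrightarrow> suf_start w = k"
  unfolding suf_start_def
proof (rule Least_equality)
  assume m: "msuf w k"
  show "0 < k \<and> k < length w \<and> alsw (drop k w)" using m msuf_alsw msuf_def by blast
  fix y assume y: "0 < y \<and> y < length w \<and> alsw (drop y w)"
  show "k \<le> y"
  proof (rule ccontr)
    assume "\<not> k \<le> y"
    then have yk: "y < k" by simp
    have "drop (k - y) (drop y w) = drop k w" using yk by simp
    moreover have "0 < k - y" "k - y < length (drop y w)" using yk m unfolding msuf_def by auto
    ultimately have "lexgt (drop y w) (drop k w)" using y unfolding alsw_suf by metis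
    moreover have "lexgt (drop k w) (drop y w)" using m y yk unfolding msuf_def by auto
    ultimately show False using lexgt_asym by blast
  qed
qed

lemma std_msuf: "msuf w k \<Longrightarrow> std w = B (std (take k w)) (std (drop k w))"
proof -
  assume m: "msuf w k"
  have s: "suf_start w = k" using msuf_suf_start[OF m] .
  have "2 \<le> length w" "0 < k" "k < length w" using m unfolding msuf_def by auto
  then show ?thesis by (subst std.simps) (simp add: s Let_def)
qed

lemma std_single: "std [x] = L x"
  by (subst std.simps) (simp add: Let_def)

lemma std_ge2:
  assumes "2 \<le> length w"
  shows "0 < suf_start w \<and> suf_start w < length w \<and>
         std w = B (std (take (suf_start w) w)) (std (drop (suf_start w) w))"
proof -
  have ex: "0 < length w - 1 \<and> length w - 1 < length w \<and> alsw (drop (length w - 1) w)"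
  proof -
    have "length (drop (length w - 1) w) = Suc 0" using assms by simp
    then obtain y where "drop (length w - 1) w = [y]" by (metis length_0_conv length_Suc_conv)
    then show ?thesis using assms alsw_single by auto
  qed
  have P: "0 < suf_start w \<and> suf_start w < length w \<and> alsw (drop (suf_start w) w)"
    unfolding suf_start_def by (rule LeastI[of _ "length w - 1"]) (rule ex)
  then show ?thesis using assms by (subst std.simps) (simp add: Let_def)
qed

lemma holes_std: "holes (std w) = 0"
proof (induction w rule: length_induct)
  case (1 w)
  have IH: "length ys < length w \<Longrightarrow> holes (std ys) = 0" for ys :: "'a list"
    using 1(1) by blast
  show ?case
  proof (cases "2 \<le> length w")
    case True
    note S = std_ge2[OF True]
    define k where "k = suf_start w"
    have k: "0 < k" "k < length w" using S k_def by auto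
    have "holes (std (take k w)) = 0" by (rule IH) (use k in auto)
    moreover have "holes (std (drop k w)) = 0" by (rule IH) (use k in auto)
    ultimately show ?thesis using S k_def by simp
  next
    case False
    then show ?thesis by (subst std.simps) (simp add: Let_def)
  qed
qed

lemma leaves_std: "w \<noteq> [] \<Longrightarrow> leaves (std w) = w"
proof (induction w rule: length_induct)
  case (1 w)
  have IH: "length ys < length w \<Longrightarrow> ys \<noteq> [] \<Longrightarrow> leaves (std ys) = ys" for ys :: "'a list"
    using 1(1) by blast
  show ?case
  proof (cases "2 \<le> length w")
    case True
    note S = std_ge2[OF True]
    define k where "k = suf_start w"
    have k: "0 < k" "k < length w" using S k_def by auto
    have "leaves (std (take k w)) = take k w"
      by (rule IH) (use k in auto)
    moreover have "leaves (std (drop k w)) = drop k w"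
      by (rule IH) (use k in auto)
    ultimately show ?thesis using S k_def by simp
  next
    case False
    have "length w \<noteq> 0" using 1(2) by simp
    then have "length w = Suc 0" using False by linarith
    then obtain x where "w = [x]" by (metis length_0_conv length_Suc_conv)
    then show ?thesis by (simp add: std_single)
  qed
qed

lemma msuf_take_alsw:
  assumes A: "alsw w" and m: "msuf w k"
  shows "alsw (take k w)"
  unfolding alsw_suf
proof (intro conjI allI impI)
  define u where "u = take k w"
  define v where "v = drop k w"
  have w: "w = u @ v" by (simp add: u_def v_def)
  have k: "0 < k" "k < length w" using m msuf_def by auto
  have lu: "length u = k" using k u_def by simp
  show "take k w \<noteq> []" using k by (cases w) auto
  fix j assume j: "0 < j" "j < length (take k w)"
  define u' where "u' = drop j u"
  have ju: "j < length u" using j u_def by simp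
  have dw: "drop j w = u' @ v" using ju by (simp add: w u'_def)
  have "lexgt w (drop j w)" using A j k unfolding alsw_suf by auto
  then have wu: "lexgt (u @ v) (u' @ v)" using dw w by simp
  have "u \<noteq> u'"
  proof
    assume "u = u'"
    then have "length u = length u - j" unfolding u'_def by (metis length_drop)
    then show False using j ju by simp
  qed
  show "lexgt (take k w) (drop j (take k w))"
  proof (rule ccontr)
    assume N: "\<not> lexgt (take k w) (drop j (take k w))"
    then have "\<not> lexgt u u'" by (simp add: u_def u'_def)
    then have l2: "lexgt u' u" using lexgt_total \<open>u \<noteq> u'\<close> by blast
    show False
    proof (cases "\<exists>t. u = u' @ t")
      case True
      then obtain t where t: "u = u' @ t" by blast
      have tne: "t \<noteq> []" using t \<open>u \<noteq> u'\<close> by auto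
      have u'ne: "u' \<noteq> []" using ju unfolding u'_def by simp
      have "lexgt (u' @ t @ v) (u' @ v)" using wu t by simp
      then have tv: "lexgt (t @ v) v" by simp
      have jj: "0 < length u'" "length u' < length w" using u'ne ju lu k u'_def by auto
      have dd: "drop (length u') w = t @ v" using t w by simp
      have "length u' \<noteq> k" using tne t lu by auto
      then have "lexgt (drop k w) (drop (length u') w)" using m jj unfolding msuf_def by blast
      then have "lexgt v (t @ v)" using dd v_def by simp
      then show False using tv lexgt_asym by blast
    next
      case False
      then have "lexgt (u' @ v) (u @ v)" using l2 lexgt_notprefix by blast
      then show False using wu lexgt_asym by blast
    qed
  qed
qed

lemma geq_append_gt:
  assumes "x \<noteq> []" "x = v \<or> lexgt v x"
  shows "lexgt v (x @ v)"
proof (cases "x = v")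
  case True
  then show ?thesis using assms lexgt_prefix by blast
next
  case False
  then have l: "lexgt v x" using assms by blast
  show ?thesis
  proof (cases "\<exists>t. x = v @ t")
    case True
    then obtain t where "x = v @ t" by blast
    then show ?thesis using lexgt_prefix[of "t @ v" v] assms by auto
  next
    case False
    then have "lexgt (v @ []) (x @ v)" using l lexgt_notprefix by blast
    then show ?thesis by simp
  qed
qed

lemma alsw_concat:
  assumes u: "alsw u" and v: "alsw v" and uv: "lexgt u v"
  shows "alsw (u @ v) \<and> lexgt (u @ v) v"
proof -
  have une: "u \<noteq> []" and vne: "v \<noteq> []" using u v alsw_def by auto
  have g: "lexgt (u @ v) v"
  proof (cases "\<exists>t. v = u @ t")
    case True
    then obtain t where t: "v = u @ t" by blast
    have tne: "t \<noteq> []"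
    proof
      assume "t = []" then have "v = u" using t by simp
      then show False using uv lexgt_irrefl by metis
    qed
    have "lexgt v (drop (length u) v)"
      using v une tne t unfolding alsw_suf by (metis length_append length_greater_0_conv less_add_same_cancel1)
    then have "lexgt v t" using t by simp
    then have "lexgt (u @ v) (u @ t)" by simp
    then show ?thesis using t by simp
  next
    case False
    then have "lexgt (u @ v) (v @ [])" using uv lexgt_notprefix by blast
    then show ?thesis by simp
  qed
  have "alsw (u @ v)" unfolding alsw_suf
  proof (intro conjI allI impI)
    show "u @ v \<noteq> []" using une by simp
    fix j assume j: "0 < j" "j < length (u @ v)"
    consider "j < length u" | "j = length u" | "length u < j" by linarith
    then show "lexgt (u @ v) (drop j (u @ v))"
    proof cases
      case 1
      have "lexgt u (drop j u)" using u j 1 unfolding alsw_suf by auto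
      then have "lexgt (u @ v) (drop j u @ v)"
        by (rule lexgt_longer_notprefix[rotated]) (use 1 j in auto)
      then show ?thesis using 1 by simp
    next
      case 2
      then show ?thesis using g by simp
    next
      case 3
      have "lexgt v (drop (j - length u) v)" using v j 3 unfolding alsw_suf by auto
      then show ?thesis using 3 g lexgt_trans by auto
    qed
  qed
  then show ?thesis using g by blast
qed

lemma std_pair:
  assumes u: "alsw u" and v: "alsw v" and uv: "lexgt u v"
    and cond: "\<forall>j. 0 < j \<longrightarrow> j < length u \<longrightarrow> drop j u = v \<or> lexgt v (drop j u)"
  shows "msuf (u @ v) (length u)"
  unfolding msuf_def
proof (intro conjI allI impI)
  have une: "u \<noteq> []" and vne: "v \<noteq> []" using u v alsw_def by auto
  show "0 < length u" "length u < length (u @ v)" using une vne by auto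
  fix j assume j: "0 < j" "j < length (u @ v)" "j \<noteq> length u"
  show "lexgt (drop (length u) (u @ v)) (drop j (u @ v))"
  proof (cases "j < length u")
    case True
    have c: "drop j u = v \<or> lexgt v (drop j u)" using cond True j(1) by blast
    have ne: "drop j u \<noteq> []" using True by simp
    have "lexgt v (drop j u @ v)" using geq_append_gt[OF ne c] .
    moreover have "drop j (u @ v) = drop j u @ v" using True by simp
    moreover have "drop (length u) (u @ v) = v" by simp
    ultimately show ?thesis by simp
  next
    case False
    then have "length u < j" using j by simp
    then have "0 < j - length u" "j - length u < length v" using j by auto
    then have "lexgt v (drop (j - length u) v)" using v alsw_sufD by blast
    moreover have "drop j (u @ v) = drop (j - length u) v" using False by simp
    moreover have "drop (length u) (u @ v) = v" by simp
    ultimately show ?thesis by simp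
  qed
qed

section \<open>Algebra of k[Y]<X>\<close>

abbreviation (input) LK where "LK \<equiv> Poly_Mapping.lookup"
abbreviation (input) KS where "KS \<equiv> Poly_Mapping.keys"
abbreviation (input) SG where "SG \<equiv> Poly_Mapping.single"

definition mm :: "'y multiset \<times> 'x list \<Rightarrow> 'y multiset \<times> 'x list \<Rightarrow> 'y multiset \<times> 'x list" where
  "mm m n = (fst m + fst n, snd m @ snd n)"

lemma mm_assoc: "mm (mm a b) c = mm a (mm b c)"
  by (simp add: mm_def add.assoc)

lemma wmult_mm: "wmult p q = (\<Sum>m\<in>KS p. \<Sum>n\<in>KS q. SG (mm m n) (LK p m * LK q n))"
  by (simp add: wmult_def mm_def)

lemma wmult_super:
  assumes "finite AA" "KS p \<subseteq> AA" "finite BB" "KS q \<subseteq> BB"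
  shows "wmult p q = (\<Sum>m\<in>AA. \<Sum>n\<in>BB. SG (mm m n) (LK p m * LK q n))"
proof -
  have "wmult p q = (\<Sum>m\<in>KS p. \<Sum>n\<in>BB. SG (mm m n) (LK p m * LK q n))"
    unfolding wmult_mm
  proof (rule sum.cong[OF refl])
    fix m
    show "(\<Sum>n\<in>KS q. SG (mm m n) (LK p m * LK q n)) = (\<Sum>n\<in>BB. SG (mm m n) (LK p m * LK q n))"
      by (rule sum.mono_neutral_left) (use assms in \<open>auto simp: in_keys_iff\<close>)
  qed
  also have "\<dots> = (\<Sum>m\<in>AA. \<Sum>n\<in>BB. SG (mm m n) (LK p m * LK q n))"
    by (rule sum.mono_neutral_left) (use assms in \<open>auto simp: in_keys_iff\<close>)
  finally show ?thesis .
qed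

lemma keys_add_sub: "KS (p + q) \<subseteq> KS p \<union> KS q"
  by (metis Poly_Mapping.keys_add)

lemma wmult_add_left: "wmult (p + q) s = wmult p s + wmult q s"
proof -
  let ?A = "KS p \<union> KS q"
  have "wmult (p + q) s = (\<Sum>m\<in>?A. \<Sum>n\<in>KS s. SG (mm m n) (LK (p+q) m * LK s n))"
    using keys_add_sub[of p q] by (intro wmult_super) auto
  also have "\<dots> = (\<Sum>m\<in>?A. \<Sum>n\<in>KS s. SG (mm m n) (LK p m * LK s n))
                + (\<Sum>m\<in>?A. \<Sum>n\<in>KS s. SG (mm m n) (LK q m * LK s n))"
    by (simp add: lookup_add distrib_right single_add sum.distrib)
  also have "\<dots> = wmult p s + wmult q s"
    by (subst (1 2) wmult_super[where AA = ?A and BB = "KS s"]) auto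
  finally show ?thesis .
qed

lemma wmult_add_right: "wmult s (p + q) = wmult s p + wmult s q"
proof -
  let ?B = "KS p \<union> KS q"
  have "wmult s (p + q) = (\<Sum>m\<in>KS s. \<Sum>n\<in>?B. SG (mm m n) (LK s m * LK (p+q) n))"
    using keys_add_sub[of p q] by (intro wmult_super) auto
  also have "\<dots> = (\<Sum>m\<in>KS s. \<Sum>n\<in>?B. SG (mm m n) (LK s m * LK p n))
                + (\<Sum>m\<in>KS s. \<Sum>n\<in>?B. SG (mm m n) (LK s m * LK q n))"
    by (simp add: lookup_add distrib_left single_add sum.distrib)
  also have "\<dots> = wmult s p + wmult s q"
    by (subst (1 2) wmult_super[where AA = "KS s" and BB = ?B]) auto
  finally show ?thesis .
qed

lemma wmult_zero_left [simp]: "wmult 0 q = 0"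
  by (simp add: wmult_def)

lemma wmult_zero_right [simp]: "wmult q 0 = 0"
  by (simp add: wmult_def)

lemma wmult_uminus_left: "wmult (- p) q = - wmult p q"
  using wmult_add_left[of p "- p" q] by (simp add: eq_neg_iff_add_eq_0 add.commute)

lemma wmult_uminus_right: "wmult q (- p) = - wmult q p"
  using wmult_add_right[of q p "- p"] by (simp add: eq_neg_iff_add_eq_0 add.commute)

lemma wmult_diff_left: "wmult (p - q) s = wmult p s - wmult q s"
  using wmult_add_left[of p "- q" s] by (simp add: wmult_uminus_left)

lemma wmult_diff_right: "wmult s (p - q) = wmult s p - wmult s q"
  using wmult_add_right[of s p "- q"] by (simp add: wmult_uminus_right)

lemma wmult_sum_left: "wmult (\<Sum>i\<in>I. p i) q = (\<Sum>i\<in>I. wmult (p i) q)"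
  by (induction I rule: infinite_finite_induct) (auto simp: wmult_add_left)

lemma wmult_sum_right: "wmult q (\<Sum>i\<in>I. p i) = (\<Sum>i\<in>I. wmult q (p i))"
  by (induction I rule: infinite_finite_induct) (auto simp: wmult_add_right)

lemma wmult_single: "wmult (SG m a) (SG n b) = SG (mm m n) (a * b)"
  by (subst wmult_super[where AA = "{m}" and BB = "{n}"]) auto

lemma pm_decomp: "(\<Sum>m\<in>KS p. SG m (LK p m)) = (p :: 'a \<Rightarrow>\<^sub>0 'b::comm_monoid_add)"
proof (rule poly_mapping_eqI)
  fix k
  have "LK (\<Sum>m\<in>KS p. SG m (LK p m)) k = (\<Sum>m\<in>KS p. (LK p m when m = k))"
    by (simp add: lookup_sum lookup_single)
  also have "\<dots> = LK p k"
    by (cases "k \<in> KS p") (auto simp: in_keys_iff when_def)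
  finally show "LK (\<Sum>m\<in>KS p. SG m (LK p m)) k = LK p k" .
qed

lemma pm_induct [case_names zero add]:
  assumes "P 0" "\<And>p m c. P p \<Longrightarrow> P (p + SG m c)"
  shows "P (p :: 'a \<Rightarrow>\<^sub>0 'b::comm_monoid_add)"
proof -
  have "P (\<Sum>m\<in>K. SG m (LK p m))" if "finite K" for K
    using that
  proof (induction K rule: finite_induct)
    case empty then show ?case using assms(1) by simp
  next
    case (insert x F)
    have "P ((\<Sum>m\<in>F. SG m (LK p m)) + SG x (LK p x))" by (rule assms(2)[OF insert.IH])
    then show ?case using insert.hyps by (simp add: add.commute)
  qed
  then show ?thesis using pm_decomp[of p] by (metis finite_keys)
qed

lemma wmult_assoc: "wmult (wmult p q) s = wmult p (wmult q s)"
proof (induction p rule: pm_induct)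
  case zero then show ?case by simp
next
  case (add p m c)
  have "wmult (wmult (SG m c) q) s = wmult (SG m c) (wmult q s)"
  proof (induction q rule: pm_induct)
    case zero then show ?case by simp
  next
    case (add q n d)
    have "wmult (wmult (SG m c) (SG n d)) s = wmult (SG m c) (wmult (SG n d) s)"
    proof (induction s rule: pm_induct)
      case zero then show ?case by simp
    next
      case (add s l e)
      then show ?case
        by (simp add: wmult_add_right wmult_single mm_assoc mult.assoc)
    qed
    then show ?case using add by (simp add: wmult_add_right wmult_add_left)
  qed
  then show ?case using add by (simp add: wmult_add_left)
qed

definition one1 :: "('y, 'x, 'k::field) kpol" where
  "one1 = SG ({#}, []) 1"

lemma wmult_one_left [simp]: "wmult one1 p = p"
proof (induction p rule: pm_induct)
  case zero then show ?case by simp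
next
  case (add p m c) then show ?case
    by (simp add: one1_def wmult_add_right wmult_single mm_def)
qed

lemma wmult_one_right [simp]: "wmult p one1 = p"
proof (induction p rule: pm_induct)
  case zero then show ?case by simp
next
  case (add p m c) then show ?case
    by (simp add: one1_def wmult_add_left wmult_single mm_def)
qed

lemma kY_single: "SG (b, []) c \<in> kY"
  by (simp add: kY_def)

lemma ymon_kY: "ymon b c \<in> kY"
  by (simp add: ymon_def kY_single)

lemma one1_kY: "one1 \<in> kY"
  by (simp add: one1_def kY_single)

lemma kY_zero: "0 \<in> kY"
  by (simp add: kY_def)

lemma kY_add:
  assumes r: "r \<in> kY" and s: "s \<in> kY" shows "r + s \<in> kY"
  unfolding kY_def
proof (rule CollectI, rule ballI)
  fix m assume "m \<in> KS (r + s)"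
  then have "m \<in> KS r \<union> KS s" by (rule subsetD[OF keys_add_sub])
  then show "snd m = []" using r s unfolding kY_def by auto
qed

lemma kY_uminus: "r \<in> kY \<Longrightarrow> - r \<in> kY"
  unfolding kY_def by simp

lemma kY_diff: "r \<in> kY \<Longrightarrow> s \<in> kY \<Longrightarrow> r - s \<in> kY"
  by (simp only: diff_conv_add_uminus) (intro kY_add kY_uminus)

lemma keys_sum_sub: "KS (\<Sum>i\<in>I. p i) \<subseteq> (\<Union>i\<in>I. KS (p i))"
  by (induction I rule: infinite_finite_induct) (auto dest!: subsetD[OF keys_add_sub])

lemma keys_wmult: "KS (wmult p q) \<subseteq> {mm m n |m n. m \<in> KS p \<and> n \<in> KS q}"
proof
  fix k assume k: "k \<in> KS (wmult p q)"
  have "k \<in> (\<Union>m\<in>KS p. KS (\<Sum>n\<in>KS q. SG (mm m n) (LK p m * LK q n)))"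
    using k unfolding wmult_mm by (rule subsetD[OF keys_sum_sub])
  then obtain m where m: "m \<in> KS p" "k \<in> KS (\<Sum>n\<in>KS q. SG (mm m n) (LK p m * LK q n))"
    by (rule UN_E)
  then have "k \<in> (\<Union>n\<in>KS q. KS (SG (mm m n) (LK p m * LK q n)))"
    by (intro subsetD[OF keys_sum_sub])
  then obtain n where n: "n \<in> KS q" "k \<in> KS (SG (mm m n) (LK p m * LK q n))" by (rule UN_E)
  then have "k = mm m n" by (simp split: if_splits)
  then show "k \<in> {mm m n |m n. m \<in> KS p \<and> n \<in> KS q}" using m(1) n(1) by (intro CollectI exI conjI)
qed

lemma kY_wmult:
  assumes r: "r \<in> kY" and s: "s \<in> kY" shows "wmult r s \<in> kY"
  unfolding kY_def
proof (rule CollectI, rule ballI)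
  fix m assume "m \<in> KS (wmult r s)"
  then have "m \<in> {mm m n |m n. m \<in> KS r \<and> n \<in> KS s}" by (rule subsetD[OF keys_wmult])
  then obtain m1 n1 where "m = mm m1 n1" "m1 \<in> KS r" "n1 \<in> KS s" by auto
  then show "snd m = []" using r s by (simp add: kY_def mm_def)
qed

lemma kY_decomp: "r \<in> kY \<Longrightarrow> r = (\<Sum>m\<in>KS r. ymon (fst m) (LK r m))"
proof -
  assume r: "r \<in> kY"
  have "r = (\<Sum>m\<in>KS r. SG m (LK r m))" using pm_decomp[of r] by simp
  also have "\<dots> = (\<Sum>m\<in>KS r. ymon (fst m) (LK r m))"
  proof (rule sum.cong[OF refl])
    fix m assume "m \<in> KS r"
    then have "snd m = []" using r kY_def by blast
    then show "SG m (LK r m) = ymon (fst m) (LK r m)" unfolding ymon_def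
      by (metis prod.collapse)
  qed
  finally show ?thesis .
qed

lemma ymon_comm: "wmult (ymon b c) p = wmult p (ymon b c)"
proof (induction p rule: pm_induct)
  case zero then show ?case by simp
next
  case (add p m d) then show ?case
    by (simp add: ymon_def wmult_add_right wmult_add_left wmult_single mm_def add.commute mult.commute)
qed

lemma kY_comm: "r \<in> kY \<Longrightarrow> wmult r p = wmult p r"
proof -
  assume r: "r \<in> kY"
  have "wmult r p = (\<Sum>m\<in>KS r. wmult (ymon (fst m) (LK r m)) p)"
    by (subst kY_decomp[OF r]) (simp add: wmult_sum_left)
  also have "\<dots> = (\<Sum>m\<in>KS r. wmult p (ymon (fst m) (LK r m)))"
    by (simp add: ymon_comm)
  also have "\<dots> = wmult p r"
    by (subst (2) kY_decomp[OF r]) (simp add: wmult_sum_right)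
  finally show ?thesis .
qed

lemma lie_antisym: "lie p q = - lie q p"
  by (simp add: lie_def)

lemma lie_self [simp]: "lie p p = 0"
  by (simp add: lie_def)

lemma lie_add_left: "lie (p + q) s = lie p s + lie q s"
  by (simp add: lie_def wmult_add_left wmult_add_right)

lemma lie_add_right: "lie s (p + q) = lie s p + lie s q"
  by (simp add: lie_def wmult_add_left wmult_add_right)

lemma lie_zero_left [simp]: "lie 0 p = 0" and lie_zero_right [simp]: "lie p 0 = 0"
  by (simp_all add: lie_def)

lemma lie_uminus_left: "lie (- p) q = - lie p q"
  by (simp add: lie_def wmult_uminus_left wmult_uminus_right)

lemma lie_uminus_right: "lie q (- p) = - lie q p"
  by (simp add: lie_def wmult_uminus_left wmult_uminus_right)

lemma lie_diff_left: "lie (p - q) s = lie p s - lie q s"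
  by (simp add: lie_def wmult_diff_left wmult_diff_right)

lemma lie_kY_left: 
  assumes r: "r \<in> kY" shows "lie (wmult r p) q = wmult r (lie p q)"
proof -
  have "wmult q (wmult r p) = wmult (wmult q r) p" by (simp only: wmult_assoc)
  also have "\<dots> = wmult (wmult r q) p" by (simp only: kY_comm[OF r])
  also have "\<dots> = wmult r (wmult q p)" by (simp only: wmult_assoc)
  finally have e: "wmult q (wmult r p) = wmult r (wmult q p)" .
  have "lie (wmult r p) q = wmult (wmult r p) q - wmult q (wmult r p)" by (simp only: lie_def)
  also have "\<dots> = wmult r (wmult p q) - wmult r (wmult q p)" by (simp only: e wmult_assoc)
  also have "\<dots> = wmult r (lie p q)" by (simp only: lie_def wmult_diff_right)
  finally show ?thesis .
qed

lemma lie_kY_right: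
  assumes r: "r \<in> kY" shows "lie p (wmult r q) = wmult r (lie p q)"
proof -
  have "lie p (wmult r q) = - lie (wmult r q) p" by (rule lie_antisym)
  also have "\<dots> = - wmult r (lie q p)" by (simp only: lie_kY_left[OF r])
  also have "\<dots> = wmult r (- lie q p)" by (simp only: wmult_uminus_right)
  also have "\<dots> = wmult r (lie p q)" by (simp only: lie_antisym[of q p] minus_minus)
  finally show ?thesis .
qed

lemma jacobi: "lie (lie a b) c = lie a (lie b c) - lie b (lie a c)"
  unfolding lie_def wmult_diff_left wmult_diff_right wmult_assoc
  by (simp add: algebra_simps)

lemma lookup_wmult:
  "LK (wmult p q) k = (\<Sum>m\<in>KS p. \<Sum>n\<in>KS q. (if mm m n = k then LK p m * LK q n else 0))"
  unfolding wmult_mm by (simp add: lookup_sum lookup_single when_def)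

definition Pw :: "'x::linorder list \<Rightarrow> ('y, 'x, 'k::field) kpol" where
  "Pw w = evalb 0 (std w)"

lemma evalb_noholes: "holes t = 0 \<Longrightarrow> evalb h t = evalb h' t"
  by (induction t) auto

lemma fill_noholes: "holes t = 0 \<Longrightarrow> fill t s = t"
  by (induction t) auto

lemma fill_H [simp]: "fill C H = C"
  by (induction C) auto

lemma evalb_fill: "evalb h (fill C t) = evalb (evalb h t) C"
  by (induction C) auto

lemma evalb_kY:
  assumes r: "r \<in> kY"
  shows "holes C = Suc 0 \<Longrightarrow> evalb (wmult r h) C = wmult r (evalb h C)"
proof (induction C)
  case (L x) then show ?case by simp
next
  case H then show ?case by simp
next
  case (B l s)
  show ?case
  proof (cases "holes l = 0")
    case True
    then have hs: "holes s = Suc 0" using B.prems by simp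
    have "evalb (wmult r h) (B l s) = lie (evalb h l) (wmult r (evalb h s))"
      using B.IH(2)[OF hs] evalb_noholes[OF True, of "wmult r h" h] by simp
    also have "\<dots> = wmult r (evalb h (B l s))" by (simp add: lie_kY_right[OF r])
    finally show ?thesis .
  next
    case False
    then have hl: "holes l = Suc 0" and hs: "holes s = 0" using B.prems by auto
    have "evalb (wmult r h) (B l s) = lie (wmult r (evalb h l)) (evalb h s)"
      using B.IH(1)[OF hl] evalb_noholes[OF hs, of "wmult r h" h] by simp
    also have "\<dots> = wmult r (evalb h (B l s))" by (simp add: lie_kY_left[OF r])
    finally show ?thesis .
  qed
qed

lemma Pw_single: "Pw [x] = var x"
  by (simp add: Pw_def std_single)

lemma Pw_msuf: "msuf w k \<Longrightarrow> Pw w = lie (Pw (take k w)) (Pw (drop k w))"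
  by (simp add: Pw_def std_msuf)

fun punch :: "nat \<Rightarrow> 'x btree \<Rightarrow> 'x btree" where
  "punch i (L x) = (if i = 0 then H else L x)"
| "punch i H = H"
| "punch i (B l r) = (if i < length (leaves l) then B (punch i l) r
     else B l (punch (i - length (leaves l)) r))"

lemma punch_props:
  "holes t = 0 \<Longrightarrow> i < length (leaves t) \<Longrightarrow>
    holes (punch i t) = 1 \<and> pre (punch i t) = take i (leaves t) \<and>
    fill (punch i t) (L (leaves t ! i)) = t"
proof (induction t arbitrary: i)
  case (L x) then show ?case by simp
next
  case H then show ?case by simp
next
  case (B l r)
  have hl: "holes l = 0" and hr: "holes r = 0" using B.prems by auto
  show ?case
  proof (cases "i < length (leaves l)")
    case True
    note IH = B.IH(1)[OF hl True]
    then show ?thesis using True hl hr by (simp add: nth_append fill_noholes)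
  next
    case False
    then have i': "i - length (leaves l) < length (leaves r)" using B.prems by simp
    note IH = B.IH(2)[OF hr i']
    then show ?thesis using False hl hr by (simp add: nth_append fill_noholes)
  qed
qed

lemma size_fill: "0 < holes C \<Longrightarrow> size t \<le> size (fill C t) \<and> (C \<noteq> H \<longrightarrow> size t < size (fill C t))"
proof (induction C)
  case (L x) then show ?case by simp
next
  case H then show ?case by simp
next
  case (B l r)
  show ?case
  proof (cases "0 < holes l")
    case True
    then show ?thesis using B.IH(1) by simp
  next
    case False
    then have "0 < holes r" using B.prems by simp
    then show ?thesis using B.IH(2) by simp
  qed
qed

lemma fill_eq_H: "fill C t = t \<Longrightarrow> holes C = Suc 0 \<Longrightarrow> C = H"
  using size_fill[of C t] by auto

lemma alsw_fact_Nil: "alsw_fact [] = []"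
  unfolding alsw_fact_def
proof (rule the_equality)
  show "concat [] = [] \<and> (\<forall>ci\<in>set []. alsw ci) \<and> sorted_wrt (\<lambda>p q. p = q \<or> lexgt q p) []"
    by simp
  fix cs :: "'a list list"
  assume "concat cs = [] \<and> (\<forall>ci\<in>set cs. alsw ci) \<and> sorted_wrt (\<lambda>p q. p = q \<or> lexgt q p) cs"
  then show "cs = []" by (cases cs) (auto simp: alsw_def)
qed

lemma special_tree_letter:
  fixes a b :: "'x::linorder list"
  shows "holes (special_tree a [x] b) = 1 \<and> fill (special_tree a [x] b) (L x) = std (a @ [x] @ b)"
proof -
  define t where "t = std (a @ [x] @ b)"
  have lt: "leaves t = a @ [x] @ b" unfolding t_def by (rule leaves_std) simp
  have ht: "holes t = 0" unfolding t_def by (rule holes_std)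
  define C0 where "C0 = punch (length a) t"
  have P: "holes C0 = 1 \<and> pre C0 = take (length a) (leaves t) \<and> fill C0 (L (leaves t ! length a)) = t"
    unfolding C0_def by (rule punch_props[OF ht]) (simp add: lt)
  have tk: "take (length a) (leaves t) = a" using lt by simp
  have tn: "leaves t ! length a = x" using lt by (simp add: nth_append)
  have ok0: "spec_ok a [x] b [] C0"
    unfolding spec_ok_def
  proof (intro conjI)
    show "\<exists>d. b = [] @ d" by simp
    show "holes C0 = 1" using P by simp
    show "pre C0 = a" using P tk by simp
    have "fill C0 (L x) = t" using P tn by simp
    then show "std (a @ [x] @ b) = fill C0 (std ([x] @ []))" by (simp add: std_single t_def)
  qed
  define Q where "Q c \<longleftrightarrow> (\<exists>C. spec_ok a [x] b c C) \<and>
      (\<forall>c'. (\<exists>C. spec_ok a [x] b c' C) \<longrightarrow> length c \<le> length c')" for c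
  have "Q []" unfolding Q_def using ok0 by auto
  then have "Q (spec_c a [x] b)" unfolding spec_c_def Q_def by (rule someI)
  then have c: "spec_c a [x] b = []" unfolding Q_def using ok0 by fastforce
  have "spec_ok a [x] b [] (spec_ctx a [x] b)"
    unfolding spec_ctx_def c using ok0 by (rule someI)
  then have s: "holes (spec_ctx a [x] b) = 1" "fill (spec_ctx a [x] b) (L x) = std (a @ [x] @ b)"
    unfolding spec_ok_def by (auto simp: std_single)
  have "special_tree a [x] b = spec_ctx a [x] b"
    unfolding special_tree_def c by (simp add: alsw_fact_Nil)
  then show ?thesis using s by simp
qed

lemma nsw_letter:
  assumes "lx s = [x]" "s = wmult r (var x)" "r \<in> kY"
  shows "nsw a s b = wmult r (Pw (a @ [x] @ b))"
proof -
  note ST = special_tree_letter[of a x b]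
  have "nsw a s b = evalb (wmult r (var x)) (special_tree a [x] b)"
    unfolding nsw_def using assms by simp
  also have "\<dots> = wmult r (evalb (var x) (special_tree a [x] b))"
    using evalb_kY[OF assms(3)] ST by simp
  also have "evalb (var x) (special_tree a [x] b) = evalb (evalb 0 (L x)) (special_tree a [x] b)"
    by simp
  also have "\<dots> = evalb 0 (fill (special_tree a [x] b) (L x))" by (simp only: evalb_fill)
  also have "\<dots> = Pw (a @ [x] @ b)" using ST by (simp add: Pw_def)
  finally show ?thesis .
qed

lemma nsw_self: "nsw [] f [] = f"
proof -
  define u where "u = lx f"
  have ok0: "spec_ok [] u [] [] H" unfolding spec_ok_def by simp
  have okc: "c = []" if "spec_ok [] u [] c C" for c C using that unfolding spec_ok_def by auto
  define Q where "Q c \<longleftrightarrow> (\<exists>C. spec_ok [] u [] c C) \<and>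
      (\<forall>c'. (\<exists>C. spec_ok [] u [] c' C) \<longrightarrow> length c \<le> length c')" for c
  have "Q []" unfolding Q_def using ok0 by auto
  then have "Q (spec_c [] u [])" unfolding spec_c_def Q_def by (rule someI)
  then have c: "spec_c [] u [] = []" unfolding Q_def using okc by blast
  have "spec_ok [] u [] [] (spec_ctx [] u [])"
    unfolding spec_ctx_def c using ok0 by (rule someI)
  then have "holes (spec_ctx [] u []) = Suc 0" "fill (spec_ctx [] u []) (std u) = std u"
    unfolding spec_ok_def by auto
  then have H: "spec_ctx [] u [] = H" using fill_eq_H by blast
  have "special_tree [] u [] = H"
    unfolding special_tree_def c H by (simp add: alsw_fact_Nil)
  then show ?thesis unfolding nsw_def u_def by simp
qed

inductive_set spanY :: "'x::linorder list set \<Rightarrow> ('y, 'x, 'k::field) kpol set" for W where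
  sp0: "0 \<in> spanY W"
| spS: "p \<in> spanY W \<Longrightarrow> r \<in> kY \<Longrightarrow> z \<in> W \<Longrightarrow> p + wmult r (Pw z) \<in> spanY W"

lemma spanY_single: "z \<in> W \<Longrightarrow> r \<in> kY \<Longrightarrow> wmult r (Pw z) \<in> spanY W"
  using spS[OF sp0] by fastforce

lemma spanY_Pw: "z \<in> W \<Longrightarrow> Pw z \<in> spanY W"
  using spanY_single[of z W one1] one1_kY by simp

lemma spanY_add: "q \<in> spanY W \<Longrightarrow> p \<in> spanY W \<Longrightarrow> p + q \<in> spanY W"
proof (induction q rule: spanY.induct)
  case sp0 then show ?case by simp
next
  case (spS q r z)
  have "p + (q + wmult r (Pw z)) = (p + q) + wmult r (Pw z)" by (simp add: add.assoc)
  then show ?case using spS by (metis spanY.spS)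
qed

lemma spanY_smul: "p \<in> spanY W \<Longrightarrow> s \<in> kY \<Longrightarrow> wmult s p \<in> spanY W"
proof (induction p rule: spanY.induct)
  case sp0 then show ?case by (simp add: spanY.sp0)
next
  case (spS p r z)
  have "wmult s (p + wmult r (Pw z)) = wmult s p + wmult (wmult s r) (Pw z)"
    by (simp add: wmult_add_right wmult_assoc)
  then show ?case using spS kY_wmult by (metis spanY.spS)
qed

lemma spanY_uminus: "p \<in> spanY W \<Longrightarrow> - p \<in> spanY W"
proof (induction p rule: spanY.induct)
  case sp0 then show ?case by (simp add: spanY.sp0)
next
  case (spS p r z)
  have "- (p + wmult r (Pw z)) = - p + wmult (- r) (Pw z)"
    by (simp add: wmult_uminus_left)
  then show ?case using spS kY_uminus by (metis spanY.spS)
qed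

lemma spanY_diff: "p \<in> spanY W \<Longrightarrow> q \<in> spanY W \<Longrightarrow> p - q \<in> spanY W"
  using spanY_add[of "- q" W p] spanY_uminus[of q W] by simp

lemma spanY_mono: "p \<in> spanY W \<Longrightarrow> W \<subseteq> W' \<Longrightarrow> p \<in> spanY W'"
proof (induction p rule: spanY.induct)
  case sp0 then show ?case by (simp add: spanY.sp0)
next
  case (spS p r z) then show ?case by (auto intro: spanY.spS)
qed

lemma spanY_lie_left:
  "p \<in> spanY W \<Longrightarrow> (\<And>z. z \<in> W \<Longrightarrow> lie (Pw z) q \<in> spanY W') \<Longrightarrow> lie p q \<in> spanY W'"
proof (induction p rule: spanY.induct)
  case sp0 then show ?case by (simp add: spanY.sp0)
next
  case (spS p r z)
  have "lie (p + wmult r (Pw z)) q = lie p q + wmult r (lie (Pw z) q)"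
    by (simp add: lie_add_left lie_kY_left[OF spS.hyps(2)])
  then show ?case using spS spanY_add spanY_smul by metis
qed

lemma spanY_lie_right:
  "q \<in> spanY W \<Longrightarrow> (\<And>z. z \<in> W \<Longrightarrow> lie p (Pw z) \<in> spanY W') \<Longrightarrow> lie p q \<in> spanY W'"
proof (induction q rule: spanY.induct)
  case sp0 then show ?case by (simp add: spanY.sp0)
next
  case (spS q r z)
  have "lie p (q + wmult r (Pw z)) = lie p q + wmult r (lie p (Pw z))"
    by (simp add: lie_add_right lie_kY_right[OF spS.hyps(2)])
  then show ?case using spS spanY_add spanY_smul by metis
qed

definition Wset :: "'x::linorder list \<Rightarrow> 'x set \<Rightarrow> nat \<Rightarrow> 'x list set" where
  "Wset v A n = {z. alsw z \<and> lexgt z v \<and> set z \<subseteq> A \<and> length z = n}"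

definition mu :: "'x::linorder list \<Rightarrow> 'x list \<Rightarrow> nat" where
  "mu u v = card {z. length z \<le> length u + length v \<and> set z \<subseteq> set u \<union> set v \<and> lexgt z v}"

lemma mu_less:
  assumes "set u' \<union> set v' \<subseteq> set u \<union> set v" "length u' + length v' = length u + length v"
    and "lexgt v' v"
  shows "mu u' v' < mu u v"
proof -
  let ?N = "length u + length v"
  let ?S' = "{z. length z \<le> ?N \<and> set z \<subseteq> set u' \<union> set v' \<and> lexgt z v'}"
  let ?S = "{z. length z \<le> ?N \<and> set z \<subseteq> set u \<union> set v \<and> lexgt z v}"
  have fin: "finite ?S"
    by (rule finite_subset[OF _ finite_lists_length_le[of "set u \<union> set v" ?N]]) auto
  have sub: "?S' \<subseteq> ?S" using assms lexgt_trans by blast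
  have "v' \<in> ?S" using assms by auto
  moreover have "v' \<notin> ?S'" using lexgt_irrefl by blast
  ultimately have "?S' \<subset> ?S" using sub by blast
  then have "card ?S' < card ?S" using fin by (rule psubset_card_mono[rotated])
  then show ?thesis unfolding mu_def using assms(2) by simp
qed

lemma I_main:
  "\<forall>u v. length u + length v = n \<longrightarrow> mu u v = k \<longrightarrow> alsw u \<longrightarrow> alsw v \<longrightarrow> lexgt u v \<longrightarrow>
      (lie (Pw u) (Pw v) :: ('y, 'x::linorder, 'k::field) kpol) \<in> spanY (Wset v (set u \<union> set v) n)"
proof (induction n arbitrary: k rule: less_induct)
  case (less n)
  note OIH = less.IH
  show ?case
  proof (induction k rule: less_induct)
    case (less k)
    note IIH = less.IH
    show ?case
    proof (intro allI impI)
      fix u v :: "'x list"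
      assume Hn: "length u + length v = n" and Hk: "mu u v = k" and au: "alsw u" and av: "alsw v"
        and uv: "lexgt u v"
      define A where "A = set u \<union> set v"
      define T where "T = (spanY (Wset v A n) :: ('y, 'x, 'k) kpol set)"
      have HP: "(lie (Pw a) (Pw b) :: ('y, 'x, 'k) kpol) \<in> spanY (Wset v A n)"
        if ab: "alsw a" "alsw b" "length a + length b = n" "set a \<union> set b \<subseteq> A"
          "lexgt a v" "lexgt b v" for a b
      proof -
        consider "a = b" | "lexgt a b" | "lexgt b a" using lexgt_total by blast
        then show ?thesis
        proof cases
          case 1 then show ?thesis by (simp add: spanY.sp0)
        next
          case 2
          have m: "mu a b < k" unfolding Hk[symmetric]
            by (rule mu_less) (use ab Hn A_def in auto)
          have "(lie (Pw a) (Pw b) :: ('y, 'x, 'k) kpol) \<in> spanY (Wset b (set a \<union> set b) n)"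
            using IIH[OF m] ab 2 by blast
          moreover have "Wset b (set a \<union> set b) n \<subseteq> Wset v A n"
            unfolding Wset_def using ab lexgt_trans by blast
          ultimately show ?thesis by (rule spanY_mono)
        next
          case 3
          have m: "mu b a < k" unfolding Hk[symmetric]
            by (rule mu_less) (use ab Hn A_def in auto)
          have "(lie (Pw b) (Pw a) :: ('y, 'x, 'k) kpol) \<in> spanY (Wset a (set b \<union> set a) n)"
            using IIH[OF m] ab 3 by (metis add.commute)
          moreover have "Wset a (set b \<union> set a) n \<subseteq> Wset v A n"
            unfolding Wset_def using ab lexgt_trans by blast
          ultimately have "(lie (Pw b) (Pw a) :: ('y, 'x, 'k) kpol) \<in> spanY (Wset v A n)" by (rule spanY_mono)
          then have "- (lie (Pw b) (Pw a) :: ('y, 'x, 'k) kpol) \<in> spanY (Wset v A n)" by (rule spanY_uminus)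
          then show ?thesis by (metis lie_antisym)
        qed
      qed
      have "(lie (Pw u) (Pw v) :: ('y, 'x, 'k) kpol) \<in> T"
      proof (cases "\<forall>j. 0 < j \<longrightarrow> j < length u \<longrightarrow> drop j u = v \<or> lexgt v (drop j u)")
        case True
        have ms: "msuf (u @ v) (length u)" by (rule std_pair[OF au av uv True])
        have "Pw (u @ v) = (lie (Pw u) (Pw v) :: ('y, 'x, 'k) kpol)"
          using Pw_msuf[OF ms] by simp
        moreover have "u @ v \<in> Wset v A n"
          using alsw_concat[OF au av uv] Hn unfolding Wset_def A_def by auto
        ultimately show ?thesis unfolding T_def using spanY_Pw by metis
      next
        case False
        then obtain j where j: "0 < j" "j < length u" "drop j u \<noteq> v" "\<not> lexgt v (drop j u)" by blast
        then have "2 \<le> length u" by linarith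
        then obtain k1 where mk: "msuf u k1" using msuf_exists by blast
        define u1 where "u1 = take k1 u"
        define u2 where "u2 = drop k1 u"
        have k1: "0 < k1" "k1 < length u" using mk msuf_def by auto
        have uu: "u = u1 @ u2" by (simp add: u1_def u2_def)
        have au1: "alsw u1" unfolding u1_def by (rule msuf_take_alsw[OF au mk])
        have au2: "alsw u2" unfolding u2_def by (rule msuf_alsw[OF mk])
        have Pu: "(Pw u :: ('y, 'x, 'k) kpol) = lie (Pw u1) (Pw u2)"
          unfolding u1_def u2_def by (rule Pw_msuf[OF mk])
        have lu: "length u1 = k1" "length u2 = length u - k1" using k1 u1_def u2_def by auto
        have u2v: "lexgt u2 v"
        proof (rule ccontr)
          assume N: "\<not> lexgt u2 v"
          have ge: "u2 = v \<or> lexgt v u2" using N lexgt_total by blast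
          have "drop j u = u2 \<or> lexgt u2 (drop j u)"
            using mk j unfolding msuf_def u2_def by (cases "j = k1") auto
          then have "drop j u = v \<or> lexgt v (drop j u)" using ge lexgt_trans by blast
          then show False using j by blast
        qed
        have u1v: "lexgt u1 v"
        proof -
          have "u2 \<noteq> []" using k1 u2_def by simp
          then have "lexgt u1 u" using uu lexgt_prefix by metis
          then show ?thesis using uv lexgt_trans by blast
        qed
        have su1: "set u1 \<subseteq> A" and su2: "set u2 \<subseteq> A"
          unfolding A_def u1_def u2_def using set_take_subset set_drop_subset by fastforce+
        have J: "(lie (Pw u) (Pw v) :: ('y, 'x, 'k) kpol) =
            lie (Pw u1) (lie (Pw u2) (Pw v)) - lie (Pw u2) (lie (Pw u1) (Pw v))"
          by (simp add: Pu jacobi)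
        have T1: "(lie (Pw u1) (lie (Pw u2) (Pw v)) :: ('y, 'x, 'k) kpol) \<in> spanY (Wset v A n)"
        proof -
          have lt: "length u2 + length v < n" using Hn lu k1 by simp
          have "(lie (Pw u2) (Pw v) :: ('y, 'x, 'k) kpol) \<in> spanY (Wset v (set u2 \<union> set v) (length u2 + length v))"
            using OIH[OF lt] au2 av u2v by blast
          then show ?thesis
          proof (rule spanY_lie_right)
            fix z assume z: "z \<in> Wset v (set u2 \<union> set v) (length u2 + length v)"
            show "(lie (Pw u1) (Pw z) :: ('y, 'x, 'k) kpol) \<in> spanY (Wset v A n)"
              by (rule HP) (use z au1 u1v su1 su2 Hn uu A_def in \<open>auto simp: Wset_def\<close>)
          qed
        qed
        have T2: "(lie (Pw u2) (lie (Pw u1) (Pw v)) :: ('y, 'x, 'k) kpol) \<in> spanY (Wset v A n)"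
        proof -
          have lt: "length u1 + length v < n" using Hn lu k1 by simp
          have "(lie (Pw u1) (Pw v) :: ('y, 'x, 'k) kpol) \<in> spanY (Wset v (set u1 \<union> set v) (length u1 + length v))"
            using OIH[OF lt] au1 av u1v by blast
          then show ?thesis
          proof (rule spanY_lie_right)
            fix z assume z: "z \<in> Wset v (set u1 \<union> set v) (length u1 + length v)"
            show "(lie (Pw u2) (Pw z) :: ('y, 'x, 'k) kpol) \<in> spanY (Wset v A n)"
              by (rule HP) (use z au2 u2v su1 su2 Hn uu A_def in \<open>auto simp: Wset_def\<close>)
          qed
        qed
        show ?thesis unfolding J T_def by (rule spanY_diff[OF T1 T2])
      qed
      then show "(lie (Pw u) (Pw v) :: ('y, 'x, 'k) kpol) \<in> spanY (Wset v (set u \<union> set v) n)"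
        unfolding T_def A_def .
    qed
  qed
qed

lemma lie_pair:
  assumes "alsw a" "alsw b"
  shows "(lie (Pw a) (Pw b) :: ('y, 'x::linorder, 'k::field) kpol) \<in> spanY {z. alsw z}"
proof -
  have sub: "Wset v A n \<subseteq> {z. alsw z}" for v A n unfolding Wset_def by auto
  consider "a = b" | "lexgt a b" | "lexgt b a" using lexgt_total by blast
  then show ?thesis
  proof cases
    case 1 then show ?thesis by (simp add: spanY.sp0)
  next
    case 2
    have "(lie (Pw a) (Pw b) :: ('y, 'x, 'k) kpol) \<in> spanY (Wset b (set a \<union> set b) (length a + length b))"
      using I_main assms 2 by blast
    then show ?thesis using sub spanY_mono by blast
  next
    case 3
    have "(lie (Pw b) (Pw a) :: ('y, 'x, 'k) kpol) \<in> spanY (Wset a (set b \<union> set a) (length b + length a))"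
      using I_main assms 3 by blast
    then have "(lie (Pw b) (Pw a) :: ('y, 'x, 'k) kpol) \<in> spanY {z. alsw z}" using sub spanY_mono by blast
    then have "- (lie (Pw b) (Pw a) :: ('y, 'x, 'k) kpol) \<in> spanY {z. alsw z}" by (rule spanY_uminus)
    then show ?thesis by (metis lie_antisym)
  qed
qed

lemma lie_alg_span: "p \<in> lie_alg \<Longrightarrow> (p :: ('y, 'x::linorder, 'k::field) kpol) \<in> spanY {z. alsw z}"
proof (induction p rule: lie_alg.induct)
  case (gen x)
  then show ?case using spanY_Pw[of "[x]"] alsw_single Pw_single by (metis mem_Collect_eq)
next
  case (add p q) then show ?case by (intro spanY_add add.IH)
next
  case (smul r p) then show ?case by (intro spanY_smul)
next
  case (br p q)
  show ?case
  proof (rule spanY_lie_left[OF br.IH(1)])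
    fix z :: "'x list" assume z: "z \<in> {z. alsw z}"
    show "lie (Pw z) q \<in> spanY {z. alsw z}"
    proof (rule spanY_lie_right[OF br.IH(2)])
      fix z' :: "'x list" assume z': "z' \<in> {z. alsw z}"
      show "lie (Pw z) (Pw z') \<in> spanY {z. alsw z}" using lie_pair z z' by blast
    qed
  qed
qed

lemma deglex_irrefl: "\<not> deglex_gt u u"
  by (simp add: deglex_gt_def lexgt_irrefl)

lemma deglex_trans: "deglex_gt u v \<Longrightarrow> deglex_gt v w \<Longrightarrow> deglex_gt u w"
  unfolding deglex_gt_def using lexgt_trans by (metis order.strict_trans)

lemma deglex_asym: "deglex_gt u v \<Longrightarrow> \<not> deglex_gt v u"
  using deglex_trans deglex_irrefl by blast

lemma deglex_total: "u \<noteq> v \<Longrightarrow> deglex_gt u v \<or> deglex_gt v u"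
  unfolding deglex_gt_def using lexgt_total by (metis linorder_neqE_nat)

lemma deglexY_irrefl: "\<not> deglexY_gt m m"
  by (simp add: deglexY_gt_def lexgt_irrefl)

lemma deglexY_trans: "deglexY_gt a b \<Longrightarrow> deglexY_gt b c \<Longrightarrow> deglexY_gt a c"
  unfolding deglexY_gt_def using lexgt_trans by (metis order.strict_trans)

lemma deglexY_total: "a \<noteq> b \<Longrightarrow> deglexY_gt a b \<or> deglexY_gt b a"
proof -
  assume ab: "a \<noteq> b"
  have "rev (sorted_list_of_multiset a) \<noteq> rev (sorted_list_of_multiset b)"
    using ab by (metis mset_sorted_list_of_multiset rev_rev_ident)
  then show ?thesis unfolding deglexY_gt_def using lexgt_total by (metis linorder_neqE_nat)
qed

lemma deglexY_empty: "\<not> deglexY_gt {#} b"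
  unfolding deglexY_gt_def by auto

lemma mon_gt_irrefl: "\<not> mon_gt m m"
  by (simp add: mon_gt_def deglex_irrefl deglexY_irrefl)

lemma mon_gt_trans: "mon_gt a b \<Longrightarrow> mon_gt b c \<Longrightarrow> mon_gt a c"
  unfolding mon_gt_def
proof -
  assume 1: "deglex_gt (snd a) (snd b) \<or> snd a = snd b \<and> deglexY_gt (fst a) (fst b)"
    and 2: "deglex_gt (snd b) (snd c) \<or> snd b = snd c \<and> deglexY_gt (fst b) (fst c)"
  show "deglex_gt (snd a) (snd c) \<or> snd a = snd c \<and> deglexY_gt (fst a) (fst c)"
  proof (cases "deglex_gt (snd a) (snd b)")
    case True
    then show ?thesis using 2 deglex_trans[of "snd a" "snd b" "snd c"] by auto
  next
    case False
    then have e: "snd a = snd b" "deglexY_gt (fst a) (fst b)" using 1 by auto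
    then show ?thesis using 2 deglexY_trans[of "fst a" "fst b" "fst c"] by auto
  qed
qed

lemma mon_gt_asym: "mon_gt a b \<Longrightarrow> \<not> mon_gt b a"
  using mon_gt_trans mon_gt_irrefl by blast

lemma mon_gt_total: "a \<noteq> b \<Longrightarrow> mon_gt a b \<or> mon_gt b a"
  unfolding mon_gt_def
proof -
  assume ab: "a \<noteq> b"
  show "(deglex_gt (snd a) (snd b) \<or> snd a = snd b \<and> deglexY_gt (fst a) (fst b)) \<or>
    deglex_gt (snd b) (snd a) \<or> snd b = snd a \<and> deglexY_gt (fst b) (fst a)"
  proof (cases "snd a = snd b")
    case True
    then have "fst a \<noteq> fst b" using ab by (simp add: prod_eq_iff)
    then show ?thesis using True deglexY_total[of "fst a" "fst b"] by auto
  next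
    case False
    then show ?thesis using deglex_total[of "snd a" "snd b"] by auto
  qed
qed

lemma lead_prop:
  fixes p :: "('y::linorder, 'x::linorder, 'k::field) kpol"
  assumes "p \<noteq> 0"
  shows "lead p \<in> KS p \<and> (\<forall>n\<in>KS p. n \<noteq> lead p \<longrightarrow> mon_gt (lead p) n)"
proof -
  have "\<exists>m\<in>KS p. \<forall>n\<in>KS p. n \<noteq> m \<longrightarrow> mon_gt m n"
  proof (rule exists_max)
    show "finite (KS p)" by simp
    show "KS p \<noteq> {}" using assms by simp
  next
    fix a b c :: "'y multiset \<times> 'x list"
    assume "mon_gt a b" "mon_gt b c" then show "mon_gt a c" by (rule mon_gt_trans)
  next
    fix a b :: "'y multiset \<times> 'x list"
    assume "a \<noteq> b" then show "mon_gt a b \<or> mon_gt b a" by (rule mon_gt_total)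
  qed
  then obtain m where m: "m \<in> KS p" "\<forall>n\<in>KS p. n \<noteq> m \<longrightarrow> mon_gt m n" by blast
  have "lead p = m" unfolding lead_def
  proof (rule the_equality)
    show "m \<in> KS p \<and> (\<forall>n\<in>KS p. n \<noteq> m \<longrightarrow> mon_gt m n)" using m by blast
    fix m' assume m': "m' \<in> KS p \<and> (\<forall>n\<in>KS p. n \<noteq> m' \<longrightarrow> mon_gt m' n)"
    show "m' = m"
    proof (rule ccontr)
      assume "m' \<noteq> m"
      then have "mon_gt m' m" "mon_gt m m'" using m m' by auto
      then show False using mon_gt_asym by blast
    qed
  qed
  then show ?thesis using m by simp
qed

lemma sum_sum_delta:
  assumes "finite S" "finite T" "m0 \<in> S" "n0 \<in> T"
  shows "(\<Sum>m\<in>S. \<Sum>n\<in>T. if m = m0 \<and> n = n0 then f m n else 0) = (f m0 n0 :: 'a::comm_monoid_add)"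
proof -
  have "(\<Sum>n\<in>T. if m = m0 \<and> n = n0 then f m n else 0) = (if m = m0 then f m n0 else 0)" for m
  proof (cases "m = m0")
    case True
    then show ?thesis using assms(2,4) by (simp add: sum.delta)
  next
    case False
    then show ?thesis by simp
  qed
  then show ?thesis using assms(1,3) by (simp add: sum.delta)
qed

lemma lookup_wmult_unique:
  assumes U: "\<And>m n. m \<in> KS p \<Longrightarrow> n \<in> KS q \<Longrightarrow> mm m n = k \<Longrightarrow> m = m0 \<and> n = n0"
    and k: "mm m0 n0 = k"
  shows "LK (wmult p q) k = LK p m0 * LK q n0"
proof -
  let ?A = "insert m0 (KS p)" and ?B = "insert n0 (KS q)"
  have "wmult p q = (\<Sum>m\<in>?A. \<Sum>n\<in>?B. SG (mm m n) (LK p m * LK q n))"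
    by (rule wmult_super) auto
  then have "LK (wmult p q) k = (\<Sum>m\<in>?A. \<Sum>n\<in>?B. (if mm m n = k then LK p m * LK q n else 0))"
    by (simp only: lookup_sum lookup_single when_def)
  also have "\<dots> = (\<Sum>m\<in>?A. \<Sum>n\<in>?B. (if m = m0 \<and> n = n0 then LK p m * LK q n else 0))"
  proof (rule sum.cong[OF refl], rule sum.cong[OF refl])
    fix m n assume "m \<in> ?A" "n \<in> ?B"
    show "(if mm m n = k then LK p m * LK q n else 0) = (if m = m0 \<and> n = n0 then LK p m * LK q n else 0)"
    proof (cases "m \<in> KS p \<and> n \<in> KS q")
      case True
      have iff: "(mm m n = k) = (m = m0 \<and> n = n0)"
      proof
        assume "mm m n = k" then show "m = m0 \<and> n = n0" using U[of m n] True by simp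
      next
        assume "m = m0 \<and> n = n0" then show "mm m n = k" using k by simp
      qed
      show ?thesis by (simp only: iff)
    next
      case False
      then have "LK p m * LK q n = 0" by (auto simp: in_keys_iff)
      then show ?thesis by (simp only: if_cancel)
    qed
  qed
  also have "\<dots> = LK p m0 * LK q n0" by (rule sum_sum_delta) auto
  finally show ?thesis .
qed

lemma lookup_wmult_kY:
  assumes c: "c \<in> kY" and q: "\<forall>n\<in>KS q. fst n = {#}"
  shows "LK (wmult c q) (b, w) = LK c (b, []) * LK q ({#}, w)"
proof (rule lookup_wmult_unique)
  fix m n assume m: "m \<in> KS c" and n: "n \<in> KS q" and e: "mm m n = (b, w)"
  have "snd m = []" using m c kY_def by blast
  moreover have "fst n = {#}" using n q by blast
  ultimately show "m = (b, []) \<and> n = ({#}, w)" using e unfolding mm_def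
    by (metis add.right_neutral append_Nil fst_conv prod.collapse snd_conv)
qed (simp add: mm_def)

lemma keys_wmult_kY:
  assumes c: "c \<in> kY" and q: "\<forall>n\<in>KS q. fst n = {#}"
  shows "k \<in> KS (wmult c q) \<Longrightarrow> ({#}, snd k) \<in> KS q"
proof -
  assume "k \<in> KS (wmult c q)"
  then have "LK (wmult c q) k \<noteq> 0" by (simp add: in_keys_iff)
  moreover have "LK (wmult c q) k = LK c (fst k, []) * LK q ({#}, snd k)"
    using lookup_wmult_kY[OF c q, of "fst k" "snd k"] by simp
  ultimately have "LK q ({#}, snd k) \<noteq> 0" by auto
  then show ?thesis by (simp add: in_keys_iff)
qed

lemma keys_diff_sub: "KS (p - q) \<subseteq> KS p \<union> KS q"
proof
  fix k assume "k \<in> KS (p - q)"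
  then have "LK p k - LK q k \<noteq> 0" by (simp add: in_keys_iff lookup_minus)
  then show "k \<in> KS p \<union> KS q" by (auto simp: in_keys_iff)
qed

section \<open>Triangularity\<close>

definition geqw :: "'x::linorder list \<Rightarrow> 'x list \<Rightarrow> bool" where
  "geqw u z \<longleftrightarrow> z = u \<or> lexgt u z"

lemma geqw_app:
  assumes "length z1 = length u" "geqw u z1" "geqw v z2"
  shows "geqw (u @ v) (z1 @ z2)"
  using assms unfolding geqw_def
  by (metis lexgt_append_left lexgt_same_len)

lemma geqw_trans: "geqw a b \<Longrightarrow> geqw b c \<Longrightarrow> geqw a c"
  unfolding geqw_def using lexgt_trans by blast

definition tri :: "('y, 'x::linorder, 'k::field) kpol \<Rightarrow> 'x list \<Rightarrow> bool" where
  "tri p w \<longleftrightarrow> LK p ({#}, w) = 1 \<and>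
     (\<forall>m\<in>KS p. fst m = {#} \<and> length (snd m) = length w \<and> geqw w (snd m))"

lemma tri_Pw: "alsw w \<Longrightarrow> tri (Pw w :: ('y, 'x::linorder, 'k::field) kpol) w"
proof (induction w rule: length_induct)
  case (1 w)
  have IH: "alsw ys \<Longrightarrow> length ys < length w \<Longrightarrow> tri (Pw ys :: ('y, 'x, 'k) kpol) ys" for ys
    using 1(1) by blast
  have wne: "w \<noteq> []" using 1(2) alsw_def by blast
  show ?case
  proof (cases "2 \<le> length w")
    case False
    have "length w \<noteq> 0" using wne by simp
    then have "length w = Suc 0" using False by linarith
    then obtain x where w: "w = [x]" by (metis length_0_conv length_Suc_conv)
    show ?thesis unfolding w tri_def Pw_single var_def geqw_def by simp
  next
    case True
    obtain k where mk: "msuf w k" using msuf_exists[OF True] by blast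
    define u where "u = take k w"
    define v where "v = drop k w"
    have k: "0 < k" "k < length w" using mk msuf_def by auto
    have w: "w = u @ v" by (simp add: u_def v_def)
    have lu: "length u = k" using k u_def by simp
    have au: "alsw u" unfolding u_def by (rule msuf_take_alsw[OF 1(2) mk])
    have av: "alsw v" unfolding v_def by (rule msuf_alsw[OF mk])
    have tu: "tri (Pw u :: ('y, 'x, 'k) kpol) u" by (rule IH[OF au]) (use k lu in simp)
    have tv: "tri (Pw v :: ('y, 'x, 'k) kpol) v" by (rule IH[OF av]) (use k v_def in simp)
    have P: "(Pw w :: ('y, 'x, 'k) kpol) = wmult (Pw u) (Pw v) - wmult (Pw v) (Pw u)"
      unfolding u_def v_def using Pw_msuf[OF mk] by (simp add: lie_def)
    have une: "u \<noteq> []" using lu k by auto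
    have vne: "v \<noteq> []" using k v_def by simp
    have "w = u @ v \<and> u \<noteq> [] \<and> v \<noteq> [] \<longrightarrow> lexgt w (v @ u)"
      using 1(2)[unfolded alsw_def, THEN conjunct2, THEN spec[of _ u], THEN spec[of _ v]] .
    then have rot: "lexgt w (v @ u)" using w une vne by simp
    have K1: "fst m = {#} \<and> length (snd m) = length w \<and> geqw w (snd m)"
      if "m \<in> KS (wmult (Pw u) (Pw v) :: ('y, 'x, 'k) kpol)" for m
    proof -
      have "m \<in> {mm m n |m n. m \<in> KS (Pw u :: ('y, 'x, 'k) kpol) \<and> n \<in> KS (Pw v :: ('y, 'x, 'k) kpol)}"
        using that by (rule subsetD[OF keys_wmult])
      then obtain m1 n1 where e: "m = mm m1 n1" and m1: "m1 \<in> KS (Pw u :: ('y, 'x, 'k) kpol)"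
        and n1: "n1 \<in> KS (Pw v :: ('y, 'x, 'k) kpol)" by blast
      have a1: "fst m1 = {#} \<and> length (snd m1) = length u \<and> geqw u (snd m1)"
        using tu m1 unfolding tri_def by blast
      have a2: "fst n1 = {#} \<and> length (snd n1) = length v \<and> geqw v (snd n1)"
        using tv n1 unfolding tri_def by blast
      show ?thesis using a1 a2 geqw_app[of "snd m1" u v "snd n1"] unfolding e mm_def w by simp
    qed
    have K2: "fst m = {#} \<and> length (snd m) = length w \<and> lexgt w (snd m)"
      if "m \<in> KS (wmult (Pw v) (Pw u) :: ('y, 'x, 'k) kpol)" for m
    proof -
      have "m \<in> {mm m n |m n. m \<in> KS (Pw v :: ('y, 'x, 'k) kpol) \<and> n \<in> KS (Pw u :: ('y, 'x, 'k) kpol)}"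
        using that by (rule subsetD[OF keys_wmult])
      then obtain m1 n1 where e: "m = mm m1 n1" and m1: "m1 \<in> KS (Pw v :: ('y, 'x, 'k) kpol)"
        and n1: "n1 \<in> KS (Pw u :: ('y, 'x, 'k) kpol)" by blast
      have a1: "fst m1 = {#} \<and> length (snd m1) = length v \<and> geqw v (snd m1)"
        using tv m1 unfolding tri_def by blast
      have a2: "fst n1 = {#} \<and> length (snd n1) = length u \<and> geqw u (snd n1)"
        using tu n1 unfolding tri_def by blast
      have "geqw (v @ u) (snd m1 @ snd n1)" using a1 a2 geqw_app by blast
      then have "lexgt w (snd m1 @ snd n1)" using rot lexgt_trans unfolding geqw_def by metis
      then show ?thesis using a1 a2 unfolding e mm_def w by simp
    qed
    have L2: "LK (wmult (Pw v) (Pw u) :: ('y, 'x, 'k) kpol) ({#}, w) = 0"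
    proof (rule ccontr)
      assume "LK (wmult (Pw v) (Pw u) :: ('y, 'x, 'k) kpol) ({#}, w) \<noteq> 0"
      then have "({#}, w) \<in> KS (wmult (Pw v) (Pw u) :: ('y, 'x, 'k) kpol)" by (simp add: in_keys_iff)
      then show False using K2 lexgt_irrefl by fastforce
    qed
    have L1: "LK (wmult (Pw u) (Pw v) :: ('y, 'x, 'k) kpol) ({#}, w) = 1"
    proof -
      have "LK (wmult (Pw u) (Pw v) :: ('y, 'x, 'k) kpol) ({#}, w)
          = LK (Pw u :: ('y, 'x, 'k) kpol) ({#}, u) * LK (Pw v :: ('y, 'x, 'k) kpol) ({#}, v)"
      proof (rule lookup_wmult_unique)
        fix m n assume m: "m \<in> KS (Pw u :: ('y, 'x, 'k) kpol)" and n: "n \<in> KS (Pw v :: ('y, 'x, 'k) kpol)"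
          and e: "mm m n = ({#}, w)"
        have a1: "fst m = {#} \<and> length (snd m) = length u" using tu m unfolding tri_def by blast
        have a2: "fst n = {#} \<and> length (snd n) = length v" using tv n unfolding tri_def by blast
        have "snd m @ snd n = u @ v" using e w unfolding mm_def by simp
        then have "snd m = u \<and> snd n = v" using a1 by (simp add: append_eq_append_conv)
        then show "m = ({#}, u) \<and> n = ({#}, v)" using a1 a2 by (metis prod.collapse)
      qed (simp add: mm_def w)
      then show ?thesis using tu tv unfolding tri_def by simp
    qed
    show ?thesis unfolding tri_def
    proof (intro conjI ballI)
      show "LK (Pw w :: ('y, 'x, 'k) kpol) ({#}, w) = 1" unfolding P lookup_minus L1 L2 by simp
    next
      fix m assume "m \<in> KS (Pw w :: ('y, 'x, 'k) kpol)"
      then have "m \<in> KS (wmult (Pw u) (Pw v) :: ('y, 'x, 'k) kpol) \<union> KS (wmult (Pw v) (Pw u) :: ('y, 'x, 'k) kpol)"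
        unfolding P by (rule subsetD[OF keys_diff_sub])
      then show "fst m = {#}" "length (snd m) = length w" "geqw w (snd m)"
        using K1 K2 unfolding geqw_def by blast+
    qed
  qed
qed

lemma spanY_repr:
  "p \<in> spanY W \<Longrightarrow> \<exists>Z c. finite Z \<and> Z \<subseteq> W \<and> (\<forall>z\<in>Z. c z \<in> kY \<and> c z \<noteq> 0) \<and>
      p = (\<Sum>z\<in>Z. wmult (c z) (Pw z))"
proof (induction p rule: spanY.induct)
  case sp0
  show ?case by (rule exI[of _ "{}"]) simp
next
  case (spS p r z)
  then obtain Z c where Z: "finite Z" "Z \<subseteq> W" "\<forall>z\<in>Z. c z \<in> kY \<and> c z \<noteq> 0"
    and p: "p = (\<Sum>z\<in>Z. wmult (c z) (Pw z))" by blast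
  define d where "d = (if z \<in> Z then c z else 0) + r"
  have dk: "d \<in> kY" unfolding d_def using Z(3) spS.hyps kY_add kY_zero by auto
  have s1: "p = (\<Sum>z'\<in>Z - {z}. wmult (c z') (Pw z')) + wmult (if z \<in> Z then c z else 0) (Pw z)"
  proof (cases "z \<in> Z")
    case True
    then show ?thesis unfolding p using Z(1) by (simp add: sum.remove add.commute)
  next
    case False
    then show ?thesis unfolding p by simp
  qed
  then have s2: "p + wmult r (Pw z) = (\<Sum>z'\<in>Z - {z}. wmult (c z') (Pw z')) + wmult d (Pw z)"
    unfolding d_def by (simp add: wmult_add_left add.assoc)
  show ?case
  proof (cases "d = 0")
    case True
    show ?thesis
      by (rule exI[of _ "Z - {z}"], rule exI[of _ c]) (use Z s2 True in auto)
  next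
    case False
    let ?c = "c(z := d)"
    have e1: "(\<Sum>z'\<in>insert z (Z - {z}). wmult (?c z') (Pw z')) = wmult (?c z) (Pw z) + (\<Sum>z'\<in>Z - {z}. wmult (?c z') (Pw z'))"
      by (rule sum.insert) (use Z(1) in auto)
    have e2: "(\<Sum>z'\<in>Z - {z}. wmult (?c z') (Pw z')) = (\<Sum>z'\<in>Z - {z}. wmult (c z') (Pw z'))"
      by (rule sum.cong) auto
    have e: "(\<Sum>z'\<in>insert z (Z - {z}). wmult (?c z') (Pw z')) = wmult d (Pw z) + (\<Sum>z'\<in>Z - {z}. wmult (c z') (Pw z'))"
      using e1 e2 by simp
    show ?thesis
      by (rule exI[of _ "insert z (Z - {z})"], rule exI[of _ ?c])
        (use Z s2 False dk spS.hyps e in \<open>auto simp: add.commute\<close>)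
  qed
qed

lemma tm_zero: "trivial_mod S w 0"
  unfolding trivial_mod_def by (rule exI[of _ "[]"]) simp

lemma tm_add: "trivial_mod S w h1 \<Longrightarrow> trivial_mod S w h2 \<Longrightarrow> trivial_mod S w (h1 + h2)"
  unfolding trivial_mod_def
proof -
  assume "\<exists>ts. h1 = sum_list (map (\<lambda>(\<alpha>, \<beta>, a, s, b). wmult (ymon \<beta> \<alpha>) (nsw a s b)) ts) \<and>
          (\<forall>(\<alpha>, \<beta>, a, s, b)\<in>set ts. s \<in> S \<and> alsw (a @ lx s @ b) \<and> mon_gt w (\<beta> + ly s, a @ lx s @ b))"
  then obtain ts1 where t1: "h1 = sum_list (map (\<lambda>(\<alpha>, \<beta>, a, s, b). wmult (ymon \<beta> \<alpha>) (nsw a s b)) ts1)"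
    "(\<forall>(\<alpha>, \<beta>, a, s, b)\<in>set ts1. s \<in> S \<and> alsw (a @ lx s @ b) \<and> mon_gt w (\<beta> + ly s, a @ lx s @ b))" by blast
  assume "\<exists>ts. h2 = sum_list (map (\<lambda>(\<alpha>, \<beta>, a, s, b). wmult (ymon \<beta> \<alpha>) (nsw a s b)) ts) \<and>
          (\<forall>(\<alpha>, \<beta>, a, s, b)\<in>set ts. s \<in> S \<and> alsw (a @ lx s @ b) \<and> mon_gt w (\<beta> + ly s, a @ lx s @ b))"
  then obtain ts2 where t2: "h2 = sum_list (map (\<lambda>(\<alpha>, \<beta>, a, s, b). wmult (ymon \<beta> \<alpha>) (nsw a s b)) ts2)"
    "(\<forall>(\<alpha>, \<beta>, a, s, b)\<in>set ts2. s \<in> S \<and> alsw (a @ lx s @ b) \<and> mon_gt w (\<beta> + ly s, a @ lx s @ b))" by blast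
  show "\<exists>ts. h1 + h2 = sum_list (map (\<lambda>(\<alpha>, \<beta>, a, s, b). wmult (ymon \<beta> \<alpha>) (nsw a s b)) ts) \<and>
          (\<forall>(\<alpha>, \<beta>, a, s, b)\<in>set ts. s \<in> S \<and> alsw (a @ lx s @ b) \<and> mon_gt w (\<beta> + ly s, a @ lx s @ b))"
    by (rule exI[of _ "ts1 @ ts2"]) (use t1 t2 in auto)
qed

lemma tm_single:
  assumes "s \<in> S" "alsw (a @ lx s @ b)" "mon_gt w (\<beta> + ly s, a @ lx s @ b)"
  shows "trivial_mod S w (wmult (ymon \<beta> \<alpha>) (nsw a s b))"
  unfolding trivial_mod_def by (rule exI[of _ "[(\<alpha>, \<beta>, a, s, b)]"]) (use assms in simp)

lemma tm_sum: "finite K \<Longrightarrow> (\<And>k. k \<in> K \<Longrightarrow> trivial_mod S w (F k)) \<Longrightarrow> trivial_mod S w (\<Sum>k\<in>K. F k)"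
  by (induction K rule: finite_induct) (auto intro: tm_zero tm_add)

lemma rvar_lookup:
  fixes r :: "('y, 'x, 'k::field) kpol" and x :: 'x
  assumes r: "r \<in> kY"
  shows "LK (wmult r (var x)) (\<beta>, w) = LK r (\<beta>, []) * (if w = [x] then 1 else 0)"
proof -
  have q: "\<forall>n\<in>KS (var x :: ('y, 'x, 'k::field) kpol). fst n = {#}" by (simp add: var_def)
  have "LK (wmult r (var x)) (\<beta>, w) = LK r (\<beta>, []) * LK (var x :: ('y, 'x, 'k) kpol) ({#}, w)"
    by (rule lookup_wmult_kY[OF r q])
  also have "LK (var x :: ('y, 'x, 'k) kpol) ({#}, w) = (if w = [x] then 1 else 0)"
    by (simp add: var_def lookup_single when_def)
  finally show ?thesis .
qed

lemma rvar_keys: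
  fixes r :: "('y, 'x, 'k::field) kpol" and x :: 'x
  assumes r: "r \<in> kY" and m: "m \<in> KS (wmult r (var x))"
  shows "snd m = [x]"
proof (rule ccontr)
  assume "snd m \<noteq> [x]"
  then have "LK (wmult r (var x)) (fst m, snd m) = 0" using rvar_lookup[OF r, of x "fst m" "snd m"] by simp
  then show False using m by (simp add: in_keys_iff)
qed

lemma rvar_nz:
  fixes r :: "('y, 'x, 'k::field) kpol" and x :: 'x
  assumes r: "r \<in> kY" and r0: "r \<noteq> 0"
  shows "wmult r (var x) \<noteq> 0"
proof -
  obtain k where k: "k \<in> KS r" using r0 by (metis all_not_in_conv keys_eq_empty)
  have "snd k = []" using k r kY_def by blast
  then have "LK (wmult r (var x)) (fst k, [x]) = LK r k" using rvar_lookup[OF r, of x "fst k" "[x]"] by (metis mult.right_neutral prod.collapse)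
  also have "\<dots> \<noteq> 0" using k by (simp add: in_keys_iff)
  finally show ?thesis by auto
qed

lemma rvar_lx:
  fixes r :: "('y::linorder, 'x::linorder, 'k::field) kpol"
  assumes r: "r \<in> kY" and r0: "r \<noteq> 0"
  shows "lx (wmult r (var x)) = [x]"
proof -
  have "lead (wmult r (var x)) \<in> KS (wmult r (var x))"
    using lead_prop[OF rvar_nz[OF r r0]] by blast
  then show ?thesis unfolding lx_def by (rule rvar_keys[OF r])
qed

theorem lemma4p4:
  fixes f g r :: "('y::wellorder, 'x::wellorder, 'k::field) kpol"
    and x :: 'x and a b :: "'x list"
  assumes "f \<in> lie_alg" and "g \<in> lie_alg"
    and "kmonic f" and "kmonic g"
    and "ly f = {#}"
    and "r \<in> kY" and "g = wmult r (var x)"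
    and "lx f = a @ lx g @ b"
  shows "trivial_mod ({f} \<union> {wmult r (var x') | x'. True}) (incl_w f g) (incl_comp f g a b)"
proof -
  define S where "S = {f} \<union> {wmult r (var x') | x'. True}"
  have r: "r \<in> kY" using assms(6) .
  have g0: "g \<noteq> 0" using assms(4) kmonic_def by blast
  have r0: "r \<noteq> 0" using g0 assms(7) by auto
  have lxg: "lx g = [x]" using rvar_lx[OF r r0] assms(7) by simp
  define yb where "yb = ly g"
  have leadg: "lead g = (yb, [x])" using lxg unfolding yb_def lx_def ly_def by (metis prod.collapse)
  have LPg: "lead g \<in> KS g \<and> (\<forall>n\<in>KS g. n \<noteq> lead g \<longrightarrow> mon_gt (lead g) n)"
    by (rule lead_prop[OF g0])
  have r1: "LK r (yb, []) = 1"
  proof -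
    have "LK g (lead g) = 1" using assms(4) kmonic_def by blast
    then show ?thesis using rvar_lookup[OF r, of x yb "[x]"] assms(7) leadg by simp
  qed
  have rlow: "deglexY_gt yb \<beta>" if b: "\<beta> \<noteq> yb" "LK r (\<beta>, []) \<noteq> 0" for \<beta>
  proof -
    have "LK g (\<beta>, [x]) \<noteq> 0" using rvar_lookup[OF r, of x \<beta> "[x]"] assms(7) b by simp
    then have "(\<beta>, [x]) \<in> KS g" by (simp add: in_keys_iff)
    moreover have "(\<beta>, [x]) \<noteq> lead g" using leadg b by simp
    ultimately have "mon_gt (yb, [x]) (\<beta>, [x])" using LPg leadg by metis
    then show ?thesis unfolding mon_gt_def using deglex_irrefl[of "[x]"] by auto
  qed
  have f0: "f \<noteq> 0" using assms(3) kmonic_def by blast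
  obtain Z c where Z: "finite Z" "Z \<subseteq> {z. alsw z}" "\<forall>z\<in>Z. c z \<in> kY \<and> c z \<noteq> 0"
    and fZ: "f = (\<Sum>z\<in>Z. wmult (c z) (Pw z))"
    using spanY_repr[OF lie_alg_span[OF assms(1)]] by blast
  have Zne: "Z \<noteq> {}" using f0 fZ by auto
  have "\<exists>m\<in>Z. \<forall>z\<in>Z. z \<noteq> m \<longrightarrow> deglex_gt m z"
  proof (rule exists_max)
    show "finite Z" "Z \<noteq> {}" using Z(1) Zne by auto
  next
    fix u v w :: "'x list" assume "deglex_gt u v" "deglex_gt v w" then show "deglex_gt u w" by (rule deglex_trans)
  next
    fix u v :: "'x list" assume "u \<noteq> v" then show "deglex_gt u v \<or> deglex_gt v u" by (rule deglex_total)
  qed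
  then obtain m where m: "m \<in> Z" "\<forall>z\<in>Z. z \<noteq> m \<longrightarrow> deglex_gt m z" by blast
  have alZ: "alsw z" if "z \<in> Z" for z using Z(2) that by blast
  have triZ: "tri (Pw z :: ('y, 'x, 'k) kpol) z" if "z \<in> Z" for z by (rule tri_Pw[OF alZ[OF that]])
  have keysPw: "\<forall>n\<in>KS (Pw z :: ('y, 'x, 'k) kpol). fst n = {#}" if "z \<in> Z" for z
    using triZ[OF that] unfolding tri_def by blast
  have coef: "LK f (\<beta>, w) = (\<Sum>z\<in>Z. LK (c z) (\<beta>, []) * LK (Pw z :: ('y, 'x, 'k) kpol) ({#}, w))" for \<beta> w
    unfolding fZ lookup_sum
  proof (rule sum.cong[OF refl])
    fix z assume z: "z \<in> Z"
    show "LK (wmult (c z) (Pw z)) (\<beta>, w) = LK (c z) (\<beta>, []) * LK (Pw z :: ('y, 'x, 'k) kpol) ({#}, w)"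
      by (rule lookup_wmult_kY) (use Z(3) z keysPw[OF z] in auto)
  qed
  have Pw0: "w = z \<or> deglex_gt z w" if z: "z \<in> Z" and nz: "LK (Pw z :: ('y, 'x, 'k) kpol) ({#}, w) \<noteq> 0" for z w
  proof -
    have "({#}, w) \<in> KS (Pw z :: ('y, 'x, 'k) kpol)" using nz by (simp add: in_keys_iff)
    then have "length w = length z \<and> geqw z w" using triZ[OF z] unfolding tri_def by fastforce
    then show ?thesis unfolding geqw_def deglex_gt_def by auto
  qed
  have Pwm: "LK (Pw z :: ('y, 'x, 'k) kpol) ({#}, m) = 0" if z: "z \<in> Z" "z \<noteq> m" for z
  proof (rule ccontr)
    assume "LK (Pw z :: ('y, 'x, 'k) kpol) ({#}, m) \<noteq> 0"
    then have "m = z \<or> deglex_gt z m" using Pw0[OF z(1)] by blast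
    moreover have "deglex_gt m z" using m z by blast
    ultimately show False using z(2) deglex_asym by blast
  qed
  have coefm: "LK f (\<beta>, m) = LK (c m) (\<beta>, [])" for \<beta>
  proof -
    have "LK f (\<beta>, m) = LK (c m) (\<beta>, []) * LK (Pw m :: ('y, 'x, 'k) kpol) ({#}, m)
        + (\<Sum>z\<in>Z - {m}. LK (c z) (\<beta>, []) * LK (Pw z :: ('y, 'x, 'k) kpol) ({#}, m))"
      unfolding coef using Z(1) m(1) by (simp add: sum.remove)
    also have "(\<Sum>z\<in>Z - {m}. LK (c z) (\<beta>, []) * LK (Pw z :: ('y, 'x, 'k) kpol) ({#}, m)) = 0"
      by (rule sum.neutral) (use Pwm in auto)
    also have "LK (Pw m :: ('y, 'x, 'k) kpol) ({#}, m) = 1" using triZ[OF m(1)] unfolding tri_def by blast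
    finally show ?thesis by simp
  qed
  have keysf: "snd n = m \<or> deglex_gt m (snd n)" if n: "n \<in> KS f" for n
  proof -
    have "LK f (fst n, snd n) \<noteq> 0" using n by (simp add: in_keys_iff)
    then have "(\<Sum>z\<in>Z. LK (c z) (fst n, []) * LK (Pw z :: ('y, 'x, 'k) kpol) ({#}, snd n)) \<noteq> 0"
      unfolding coef .
    then obtain z where z: "z \<in> Z" and nz: "LK (c z) (fst n, []) * LK (Pw z :: ('y, 'x, 'k) kpol) ({#}, snd n) \<noteq> 0"
      by (meson sum.neutral)
    then have "snd n = z \<or> deglex_gt z (snd n)" using Pw0 by auto
    moreover have "z = m \<or> deglex_gt m z" using m z by blast
    ultimately show ?thesis using deglex_trans by blast
  qed
  obtain \<beta>0 where b0: "LK (c m) (\<beta>0, []) \<noteq> 0"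
  proof -
    have "c m \<noteq> 0" "c m \<in> kY" using Z(3) m(1) by auto
    then obtain k where k: "k \<in> KS (c m)" by (metis all_not_in_conv keys_eq_empty)
    then have "snd k = []" using \<open>c m \<in> kY\<close> kY_def by blast
    then have "LK (c m) (fst k, []) \<noteq> 0" using k by (metis in_keys_iff prod.collapse)
    then show ?thesis using that by blast
  qed
  have leadf: "lead f = ({#}, lx f)" using assms(5) unfolding ly_def lx_def by (metis prod.collapse)
  have LPf: "lead f \<in> KS f \<and> (\<forall>n\<in>KS f. n \<noteq> lead f \<longrightarrow> mon_gt (lead f) n)"
    by (rule lead_prop[OF f0])
  have lxf: "lx f = m"
  proof -
    have A: "lx f = m \<or> deglex_gt m (lx f)" using keysf[of "lead f"] LPf leadf by simp
    have kb: "(\<beta>0, m) \<in> KS f" using coefm b0 by (simp add: in_keys_iff)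
    show ?thesis
    proof (cases "(\<beta>0, m) = lead f")
      case True then show ?thesis using leadf by simp
    next
      case False
      then have "mon_gt (lead f) (\<beta>0, m)" using LPf kb by blast
      then have "deglex_gt (lx f) m \<or> lx f = m" unfolding leadf mon_gt_def by auto
      then show ?thesis using A deglex_asym by blast
    qed
  qed
  have one_lk: "LK (one1 :: ('y, 'x, 'k) kpol) k = (if k = ({#}, []) then 1 else 0)" for k
    by (simp add: one1_def lookup_single when_def eq_commute)
  have cm: "c m = one1"
  proof (rule poly_mapping_eqI)
    fix k :: "'y multiset \<times> 'x list"
    obtain \<beta> w where k: "k = (\<beta>, w)" by (cases k)
    have cmk: "c m \<in> kY" using Z(3) m(1) by blast
    show "LK (c m) k = LK one1 k"
    proof (cases "w = []")
      case False
      have all: "\<forall>n\<in>KS (c m). snd n = []" using cmk by (simp add: kY_def)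
      have "k \<notin> KS (c m)"
      proof
        assume "k \<in> KS (c m)"
        then have "snd k = []" using all by (rule bspec[rotated])
        then show False using False k by simp
      qed
      then show ?thesis using False k one_lk by (simp add: in_keys_iff)
    next
      case True
      show ?thesis
      proof (cases "\<beta> = {#}")
        case True
        have "LK f (lead f) = 1" using assms(3) kmonic_def by blast
        then show ?thesis using coefm[of "{#}"] leadf lxf k True \<open>w = []\<close> one_lk by simp
      next
        case False
        have "LK f (\<beta>, m) = 0"
        proof (rule ccontr)
          assume "LK f (\<beta>, m) \<noteq> 0"
          then have "(\<beta>, m) \<in> KS f" by (simp add: in_keys_iff)
          moreover have "(\<beta>, m) \<noteq> lead f" using leadf False by simp
          ultimately have "mon_gt (lead f) (\<beta>, m)" using LPf by blast
          then have "deglexY_gt {#} \<beta>" unfolding leadf lxf mon_gt_def using deglex_irrefl[of m] by auto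
          then show False using deglexY_empty by blast
        qed
        then show ?thesis using coefm[of \<beta>] k \<open>w = []\<close> False one_lk by simp
      qed
    qed
  qed
  define F' where "F' = (\<Sum>z\<in>Z - {m}. wmult (c z) (Pw z) :: ('y, 'x, 'k) kpol)"
  have fdec: "f = Pw m + F'"
    unfolding fZ F'_def using Z(1) m(1) cm by (simp add: sum.remove)
  have am: "a @ [x] @ b = m" using assms(8) lxg lxf by simp
  have nswg: "nsw a g b = wmult r (Pw m)" using nsw_letter[OF lxg assms(7) r] am by simp
  have ymon1: "ymon {#} 1 = (one1 :: ('y, 'x, 'k) kpol)" by (simp add: ymon_def one1_def)
  have ic: "incl_comp f g a b = wmult (ymon yb 1) f - wmult r (Pw m)"
    unfolding incl_comp_def Let_def assms(5) yb_def[symmetric] nswg by (simp add: ymon1)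
  have iw: "incl_w f g = (yb, m)" unfolding incl_w_def using assms(5) lxf yb_def by simp
  define q where "q = ymon yb 1 - r"
  have qk: "q \<in> kY" unfolding q_def by (rule kY_diff[OF ymon_kY r])
  have hdec: "incl_comp f g a b = wmult q f + wmult r F'"
  proof -
    have "wmult r f = wmult r (Pw m) + wmult r F'" unfolding fdec by (rule wmult_add_right)
    then show ?thesis unfolding ic q_def wmult_diff_left by (simp add: algebra_simps)
  qed
  have fS: "f \<in> S" unfolding S_def by simp
  have T1: "trivial_mod S (yb, m) (wmult q f)"
  proof -
    have "wmult q f = (\<Sum>k\<in>KS q. wmult (ymon (fst k) (LK q k)) f)"
      by (subst kY_decomp[OF qk]) (simp add: wmult_sum_left)
    also have "trivial_mod S (yb, m) \<dots>"
    proof (rule tm_sum)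
      show "finite (KS q)" by simp
      fix k assume k: "k \<in> KS q"
      have sk: "snd k = []" using k qk kY_def by blast
      then have kk: "k = (fst k, [])" by (metis prod.collapse)
      have nz: "LK q k \<noteq> 0" using k by (simp add: in_keys_iff)
      have lq: "LK q k = LK (ymon yb 1 :: ('y, 'x, 'k) kpol) k - LK r k" unfolding q_def by (simp add: lookup_minus)
      have fy: "fst k \<noteq> yb"
      proof
        assume "fst k = yb"
        then have "k = (yb, [])" using kk by simp
        then have "LK q k = 0" using lq r1 by (simp add: ymon_def)
        then show False using nz by simp
      qed
      have "LK (ymon yb 1 :: ('y, 'x, 'k) kpol) k = 0" using fy kk
        by (metis fst_conv lookup_single_not_eq ymon_def)
      then have "LK r (fst k, []) \<noteq> 0" using lq nz kk by simp
      then have dg: "deglexY_gt yb (fst k)" using rlow fy by blast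
      have "trivial_mod S (yb, m) (wmult (ymon (fst k) (LK q k)) (nsw [] f []))"
        by (rule tm_single) (use fS lxf alZ[OF m(1)] dg assms(5) in \<open>auto simp: mon_gt_def\<close>)
      then show "trivial_mod S (yb, m) (wmult (ymon (fst k) (LK q k)) f)" by (simp add: nsw_self)
    qed
    finally show ?thesis .
  qed
  have T2: "trivial_mod S (yb, m) (wmult r F')"
  proof -
    have "wmult r F' = (\<Sum>z\<in>Z - {m}. wmult (c z) (wmult r (Pw z)))"
      unfolding F'_def wmult_sum_right
    proof (rule sum.cong[OF refl])
      fix z assume z: "z \<in> Z - {m}"
      have "wmult r (wmult (c z) (Pw z)) = wmult (wmult r (c z)) (Pw z)" by (simp add: wmult_assoc)
      also have "\<dots> = wmult (wmult (c z) r) (Pw z)" using kY_comm[OF r] by simp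
      finally show "wmult r (wmult (c z) (Pw z)) = wmult (c z) (wmult r (Pw z))" by (simp add: wmult_assoc)
    qed
    also have "trivial_mod S (yb, m) \<dots>"
    proof (rule tm_sum)
      show "finite (Z - {m})" using Z(1) by simp
      fix z assume z: "z \<in> Z - {m}"
      have czk: "c z \<in> kY" using Z(3) z by blast
      have az: "alsw z" using alZ z by blast
      then have zne: "z \<noteq> []" using alsw_def by blast
      have zz: "[] @ [hd z] @ tl z = z" using zne by simp
      define s where "s = wmult r (var (hd z))"
      have sS: "s \<in> S" unfolding S_def s_def by blast
      have lxs: "lx s = [hd z]" unfolding s_def by (rule rvar_lx[OF r r0])
      have ns: "nsw [] s (tl z) = wmult r (Pw z)"
        using nsw_letter[OF lxs s_def r, of "[]" "tl z"] zz by simp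
      have dz: "deglex_gt m z" using m z by blast
      have "wmult (c z) (wmult r (Pw z)) = (\<Sum>k\<in>KS (c z). wmult (ymon (fst k) (LK (c z) k)) (wmult r (Pw z)))"
        by (subst kY_decomp[OF czk]) (simp add: wmult_sum_left)
      also have "trivial_mod S (yb, m) \<dots>"
      proof (rule tm_sum)
        show "finite (KS (c z))" by simp
        fix k assume k: "k \<in> KS (c z)"
        have "trivial_mod S (yb, m) (wmult (ymon (fst k) (LK (c z) k)) (nsw [] s (tl z)))"
          by (rule tm_single) (use sS lxs zz az dz in \<open>auto simp: mon_gt_def\<close>)
        then show "trivial_mod S (yb, m) (wmult (ymon (fst k) (LK (c z) k)) (wmult r (Pw z)))"
          by (simp add: ns)
      qed
      finally show "trivial_mod S (yb, m) (wmult (c z) (wmult r (Pw z)))" .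
    qed
    finally show ?thesis .
  qed
  have "trivial_mod S (yb, m) (wmult q f + wmult r F')" by (rule tm_add[OF T1 T2])
  then show ?thesis unfolding S_def[symmetric] iw hdec .
qed

end
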